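(* Let $0<a_1\le a_2$ and $0<c_1\le c_2$ satisfy $a_1\le c_1$ and $a_1+a_2\le c_1+c_2$. Then there exists a random variable $X$ with values in $[0,1]$ such that $$\mathbb{E}[X^s]=\frac{\Gamma(a_1+s)\Gamma(a_2+s)\Gamma(c_1)\Gamma(c_2)}{\Gamma(a_1)\Gamma(a_2)\Gamma(c_1+s)\Gamma(c_2+s)}\qquad\text{for all } s>-a_1,$$ and $\log X$ is infinitely divisible. If moreover $a_1+a_2=c_1+c_2$, then $\mathbb{P}[X=1]=\frac{\Gamma(c_1)\Gamma(c_2)}{\Gamma(a_1)\Gamma(a_2)}$. *)

theory Defs
  imports "HOL-Probability.Probability" "HOL-Probability.Convolution"
begin

fun conv_pow :: "real measure \<Rightarrow> nat \<Rightarrow> real measure" where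
  "conv_pow N 0 = return borel 0"
| "conv_pow N (Suc n) = convolution N (conv_pow N n)"

definition infinitely_divisible :: "real measure \<Rightarrow> bool" where
  "infinitely_divisible \<mu> \<longleftrightarrow>
     (\<forall>n::nat. n \<ge> 1 \<longrightarrow>
        (\<exists>\<nu>. prob_space \<nu> \<and> sets \<nu> = sets borel \<and> \<mu> = conv_pow \<nu> n))"

end

theory Submission
  imports Defs
begin


lemma finite_measure_return0: "finite_measure (return borel (x::real))"
  using prob_space_return[of x borel] by (simp add: prob_space.finite_measure)


lemma conv_return0:
  assumes "finite_measure N" "sets N = sets borel"
  shows "N \<star> return borel (0::real) = N"
proof (rule measure_eqI)
  show "sets (N \<star> return borel 0) = sets N" using assms by simp
  fix A assume "A \<in> sets (N \<star> return borel 0)"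
  then have A[measurable]: "A \<in> sets borel" by simp
  have "emeasure (N \<star> return borel 0) A = \<integral>\<^sup>+x. \<integral>\<^sup>+y. indicator A (x + y) \<partial>return borel 0 \<partial>N"
    using assms by (intro convolution_emeasure') (auto intro: finite_measure_return0)
  also have "\<dots> = \<integral>\<^sup>+x. indicator A x \<partial>N"
    by (intro nn_integral_cong) (simp add: nn_integral_return)
  also have "\<dots> = emeasure N A" using assms by simp
  finally show "emeasure (N \<star> return borel 0) A = emeasure N A" .
qed

lemma conv_neg:
  fixes N M :: "real measure"
  assumes "finite_measure N" "sets N = sets borel" "finite_measure M" "sets M = sets borel"
  shows "distr (N \<star> M) borel uminus = (distr N borel uminus \<star> distr M borel uminus)"
proof (rule measure_eqI)
  fix A assume "A \<in> sets (distr (N \<star> M) borel uminus)"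
  then have A[measurable]: "A \<in> sets borel" by simp
  have [measurable_cong]: "sets N = sets borel" "sets M = sets borel" using assms by auto
  have An: "uminus -` A \<in> sets borel" by (rule measurable_sets_borel[OF _ A]) simp
  have "emeasure (distr (N \<star> M) borel uminus) A = emeasure (N \<star> M) (uminus -` A)"
    by (subst emeasure_distr) auto
  also have "\<dots> = \<integral>\<^sup>+x. \<integral>\<^sup>+y. indicator (uminus -` A) (x + y) \<partial>M \<partial>N"
    using assms An by (intro convolution_emeasure') auto
  also have "\<dots> = \<integral>\<^sup>+x. \<integral>\<^sup>+y. indicator A ((-x) + (-y)) \<partial>M \<partial>N"
    by (intro nn_integral_cong) (simp add: indicator_def)
  also have "\<dots> = \<integral>\<^sup>+x. \<integral>\<^sup>+y. indicator A ((-x) + y) \<partial>distr M borel uminus \<partial>N"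
    by (intro nn_integral_cong, subst nn_integral_distr) (auto intro!: nn_integral_cong simp: indicator_def algebra_simps)
  also have "\<dots> = \<integral>\<^sup>+x. \<integral>\<^sup>+y. indicator A (x + y) \<partial>distr M borel uminus \<partial>distr N borel uminus"
  proof -
    have m1: "uminus \<in> measurable N borel" by measurable
    have "finite_measure (distr M borel uminus)" using assms by (intro finite_measure.finite_measure_distr) auto
    then interpret MM: finite_measure "distr M borel uminus" .
    have m2: "(\<lambda>x. \<integral>\<^sup>+y. indicator A (x + y) \<partial>distr M borel uminus) \<in> borel_measurable borel"
      by (rule MM.borel_measurable_nn_integral) measurable
    have m3: "(\<lambda>x. \<integral>\<^sup>+y. indicator A (x + y) \<partial>distr M borel uminus) \<in> borel_measurable (distr N borel uminus)"
      using m2 by simp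
    show ?thesis using nn_integral_distr[OF m1 m3] by simp
  qed
  also have "\<dots> = emeasure (distr N borel uminus \<star> distr M borel uminus) A"
    using assms by (intro convolution_emeasure'[symmetric]) (auto intro!: finite_measure.finite_measure_distr)
  finally show "emeasure (distr (N \<star> M) borel uminus) A = emeasure (distr N borel uminus \<star> distr M borel uminus) A" .
qed simp

lemma conv_pow_neg:
  fixes N :: "real measure"
  assumes "finite_measure N" "sets N = sets borel"
  shows "finite_measure (conv_pow N n) \<and> sets (conv_pow N n) = sets borel \<and>
     distr (conv_pow N n) borel uminus = conv_pow (distr N borel uminus) n"
proof (induction n)
  case 0
  have "distr (return borel (0::real)) borel uminus = return borel 0"
    by (subst distr_return) auto
  then show ?case by (auto intro: finite_measure_return0)
next
  case (Suc n)
  then show ?case using assms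
    by (auto simp: conv_neg intro!: convolution_finite)
qed




definition gk :: "real \<Rightarrow> real \<Rightarrow> real \<Rightarrow> real" where
  "gk a b y = indicator {0<..} y * y powr (a - 1) * exp (- b * y)"

lemma gk_nonneg[simp]: "0 \<le> gk a b y"
  by (simp add: gk_def indicator_def)

lemma gk_measurable[measurable]: "gk a b \<in> borel_measurable borel"
  unfolding gk_def by measurable

lemma nn_integral_gk:
  assumes a: "a > 0" and b: "b > 0"
  shows "(\<integral>\<^sup>+y. ennreal (gk a b y) \<partial>lborel) = ennreal (Gamma a / b powr a)"
proof -
  define f where "f t = ennreal (indicator {0..} t * t powr (a - 1) / exp t)" for t :: real
  have fm[measurable]: "f \<in> borel_measurable borel" unfolding f_def by measurable
  have "ennreal (Gamma a) = (\<integral>\<^sup>+t. f t \<partial>lborel)"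
    unfolding f_def using Gamma_conv_nn_integral_real[OF a] by simp
  also have "\<dots> = ennreal \<bar>b\<bar> * (\<integral>\<^sup>+y. f (0 + b * y) \<partial>lborel)"
    using nn_integral_real_affine[OF fm, of b 0] b by simp
  also have "(\<integral>\<^sup>+y. f (0 + b * y) \<partial>lborel) = (\<integral>\<^sup>+y. ennreal (b powr (a - 1)) * ennreal (gk a b y) \<partial>lborel)"
  proof (intro nn_integral_cong)
    fix y :: real
    show "f (0 + b * y) = ennreal (b powr (a - 1)) * ennreal (gk a b y)"
    proof (cases "y > 0")
      case True
      then show ?thesis using b unfolding f_def gk_def
        by (simp add: ennreal_mult'[symmetric] powr_mult exp_minus field_simps)
    next
      case False
      then show ?thesis using b unfolding f_def gk_def
        by (cases "y = 0") (auto simp: indicator_def zero_le_mult_iff)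
    qed
  qed
  also have "\<dots> = ennreal (b powr (a - 1)) * (\<integral>\<^sup>+y. ennreal (gk a b y) \<partial>lborel)"
    by (rule nn_integral_cmult) measurable
  finally have *: "ennreal (Gamma a) = ennreal (b * b powr (a - 1)) * (\<integral>\<^sup>+y. ennreal (gk a b y) \<partial>lborel)"
    using b by (simp add: ennreal_mult' mult.assoc)
  have bb: "b * b powr (a - 1) = b powr a" using b by (simp add: powr_mult_base)
  have pos: "b powr a > 0" using b by simp
  have "(\<integral>\<^sup>+y. ennreal (gk a b y) \<partial>lborel) = ennreal (Gamma a) / ennreal (b powr a)"
  proof -
    have "ennreal (b powr a) \<noteq> 0" "ennreal (b powr a) \<noteq> top" using pos by auto
    then have "ennreal (b powr a) * (\<integral>\<^sup>+y. ennreal (gk a b y) \<partial>lborel) / ennreal (b powr a) = (\<integral>\<^sup>+y. ennreal (gk a b y) \<partial>lborel)"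
      by (subst mult.commute) (rule ennreal_mult_divide_eq)
    then show ?thesis using * unfolding bb by simp
  qed
  also have "\<dots> = ennreal (Gamma a / b powr a)"
    using pos a by (intro divide_ennreal) auto
  finally show ?thesis .
qed

lemma beta_piece:
  assumes a: "a > 0" and b: "b > 0" and x: "x > 0"
  shows "(\<integral>\<^sup>+y. ennreal (indicator {0<..<x} y * (x - y) powr (a - 1) * y powr (b - 1)) \<partial>lborel)
       = ennreal (x powr (a + b - 1) * Beta b a)"
proof -
  define F where "F y = ennreal (indicator {0<..<x} y * (x - y) powr (a - 1) * y powr (b - 1))" for y
  have Fm[measurable]: "F \<in> borel_measurable borel" unfolding F_def by measurable
  have B: "(\<integral>\<^sup>+t. ennreal (t powr (b - 1) * (1 - t) powr (a - 1)) * indicator {0..1} t \<partial>lborel) = ennreal (Beta b a)"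
    by (rule nn_integral_has_integral_lebesgue'[OF _ has_integral_Beta_real[OF b a]]) auto
  have "(\<integral>\<^sup>+y. F y \<partial>lborel) = ennreal \<bar>x\<bar> * (\<integral>\<^sup>+t. F (0 + x * t) \<partial>lborel)"
    using nn_integral_real_affine[OF Fm, of x 0] x by simp
  also have "(\<integral>\<^sup>+t. F (0 + x * t) \<partial>lborel) =
      (\<integral>\<^sup>+t. ennreal (x powr (a - 1) * x powr (b - 1)) * (ennreal (t powr (b - 1) * (1 - t) powr (a - 1)) * indicator {0..1} t) \<partial>lborel)"
  proof (intro nn_integral_cong)
    fix t :: real
    show "F (0 + x * t) = ennreal (x powr (a - 1) * x powr (b - 1)) * (ennreal (t powr (b - 1) * (1 - t) powr (a - 1)) * indicator {0..1} t)"
    proof (cases "0 < t \<and> t < 1")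
      case True
      then have "x - x * t = x * (1 - t)" by (simp add: algebra_simps)
      with True x show ?thesis unfolding F_def
        by (simp add: ennreal_mult'[symmetric] powr_mult mult_ac)
    next
      case False
      then have "t \<le> 0 \<or> t \<ge> 1" by auto
      then show ?thesis unfolding F_def using x
        by (auto simp: indicator_def mult_le_0_iff zero_le_mult_iff mult_less_0_iff zero_less_mult_iff)
    qed
  qed
  also have "\<dots> = ennreal (x powr (a - 1) * x powr (b - 1)) * ennreal (Beta b a)"
    by (subst nn_integral_cmult) (auto simp: B)
  finally have *: "(\<integral>\<^sup>+y. F y \<partial>lborel) = ennreal \<bar>x\<bar> * (ennreal (x powr (a - 1) * x powr (b - 1)) * ennreal (Beta b a))" .
  have **: "x * (x powr (a - 1) * x powr (b - 1)) = x powr (a + b - 1)"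
    using x by (simp add: powr_add[symmetric] powr_mult_base)
  have "Beta b a \<ge> 0" using a b by (simp add: Beta_def)
  then show ?thesis using * ** x unfolding F_def
    by (simp add: ennreal_mult'[symmetric] mult.assoc[symmetric])
qed




definition gd :: "real \<Rightarrow> real \<Rightarrow> real \<Rightarrow> real" where
  "gd a r y = r powr a / Gamma a * gk a r y"

definition gm :: "real \<Rightarrow> real \<Rightarrow> real measure" where
  "gm a r = density lborel (\<lambda>y. ennreal (gd a r y))"

lemma gd_measurable[measurable]: "gd a r \<in> borel_measurable borel"
  unfolding gd_def by measurable

lemma gd_nonneg: "a > 0 \<Longrightarrow> 0 \<le> gd a r y"
  unfolding gd_def by simp

lemma sets_gm[simp, measurable_cong]: "sets (gm a r) = sets borel"
  by (simp add: gm_def)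

lemma gm_laplace:
  assumes a: "a > 0" and r: "r > 0" and rs: "r + s > 0"
  shows "(\<integral>\<^sup>+y. ennreal (exp (- s * y)) \<partial>gm a r) = ennreal ((r / (r + s)) powr a)"
proof -
  have "(\<integral>\<^sup>+y. ennreal (exp (- s * y)) \<partial>gm a r) =
        (\<integral>\<^sup>+y. ennreal (gd a r y) * ennreal (exp (- s * y)) \<partial>lborel)"
    unfolding gm_def by (subst nn_integral_density) auto
  also have "\<dots> = (\<integral>\<^sup>+y. ennreal (r powr a / Gamma a) * ennreal (gk a (r + s) y) \<partial>lborel)"
  proof (intro nn_integral_cong)
    fix y :: real
    have e: "exp (- r * y) * exp (- s * y) = exp (- (r + s) * y)"
      by (simp add: exp_add[symmetric] algebra_simps)
    have "gd a r y * exp (- s * y) = r powr a / Gamma a * gk a (r + s) y"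
      unfolding gd_def gk_def using e[symmetric] by (simp add: mult_ac)
    then show "ennreal (gd a r y) * ennreal (exp (- s * y)) = ennreal (r powr a / Gamma a) * ennreal (gk a (r + s) y)"
      using a by (simp add: ennreal_mult'[symmetric] gd_nonneg ennreal_mult''[symmetric])
  qed
  also have "\<dots> = ennreal (r powr a / Gamma a) * ennreal (Gamma a / (r + s) powr a)"
    by (subst nn_integral_cmult) (auto simp: nn_integral_gk a rs)
  also have "\<dots> = ennreal ((r / (r + s)) powr a)"
  proof -
    have "Gamma a \<noteq> 0" using Gamma_real_pos[OF a] by simp
    then show ?thesis using a r rs by (simp add: ennreal_mult'[symmetric] powr_divide)
  qed
  finally show ?thesis .
qed

lemma gm_prob:
  assumes a: "a > 0" and r: "r > 0"
  shows "prob_space (gm a r)"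
proof
  have "emeasure (gm a r) (space (gm a r)) = (\<integral>\<^sup>+y. ennreal (exp (- 0 * y)) \<partial>gm a r)"
    by (simp add: emeasure_density gm_def)
  also have "\<dots> = 1" using gm_laplace[OF a r, of 0] r by simp
  finally show "emeasure (gm a r) (space (gm a r)) = 1" .
qed

lemma gm_AE:
  assumes "a > 0"
  shows "AE y in gm a r. y \<ge> 0"
  unfolding gm_def
  by (subst AE_density) (auto simp: gd_def gk_def indicator_def intro!: AE_I2)

lemma gm_conv:
  assumes a: "a > 0" and b: "b > 0" and r: "r > 0"
  shows "gm a r \<star> gm b r = gm (a + b) r"
proof -
  have fa: "finite_measure (gm a r)" using gm_prob[OF a r] by (simp add: prob_space.finite_measure)
  have fb: "finite_measure (gm b r)" using gm_prob[OF b r] by (simp add: prob_space.finite_measure)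
  have "gm a r \<star> gm b r = density lborel (\<lambda>x. \<integral>\<^sup>+y. ennreal (gd a r (x - y)) * ennreal (gd b r y) \<partial>lborel)"
    unfolding gm_def by (rule convolution_density) (use fa fb in \<open>auto simp: gm_def\<close>)
  also have "(\<lambda>x. \<integral>\<^sup>+y. ennreal (gd a r (x - y)) * ennreal (gd b r y) \<partial>lborel) = (\<lambda>x. ennreal (gd (a + b) r x))"
  proof
    fix x :: real
    show "(\<integral>\<^sup>+y. ennreal (gd a r (x - y)) * ennreal (gd b r y) \<partial>lborel) = ennreal (gd (a + b) r x)"
    proof (cases "x > 0")
      case False
      have "\<And>y. ennreal (gd a r (x - y)) * ennreal (gd b r y) = 0"
      proof -
        fix y :: real
        show "ennreal (gd a r (x - y)) * ennreal (gd b r y) = 0"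
        proof (cases "y > 0")
          case True
          then have "gd a r (x - y) = 0" using False by (simp add: gd_def gk_def)
          then show ?thesis by simp
        next
          case f2: False
          then have "gd b r y = 0" by (simp add: gd_def gk_def)
          then show ?thesis by simp
        qed
      qed
      then have "(\<integral>\<^sup>+y. ennreal (gd a r (x - y)) * ennreal (gd b r y) \<partial>lborel) = 0"
        by (simp del: ennreal_eq_0_iff mult_eq_0_iff)
      then show ?thesis using False by (simp add: gd_def gk_def)
    next
      case True
      define C where "C = r powr a / Gamma a * (r powr b / Gamma b) * exp (- r * x)"
      have C: "C \<ge> 0" using a b by (simp add: C_def)
      have "(\<integral>\<^sup>+y. ennreal (gd a r (x - y)) * ennreal (gd b r y) \<partial>lborel) =
         (\<integral>\<^sup>+y. ennreal C * ennreal (indicator {0<..<x} y * (x - y) powr (a - 1) * y powr (b - 1)) \<partial>lborel)"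
      proof (intro nn_integral_cong)
        fix y :: real
        show "ennreal (gd a r (x - y)) * ennreal (gd b r y) = ennreal C * ennreal (indicator {0<..<x} y * (x - y) powr (a - 1) * y powr (b - 1))"
          using a b unfolding gd_def gk_def C_def
          by (auto simp: indicator_def ennreal_mult'[symmetric] mult_exp_exp algebra_simps)
      qed
      also have "\<dots> = ennreal C * ennreal (x powr (a + b - 1) * Beta b a)"
        by (subst nn_integral_cmult) (auto simp: beta_piece a b True)
      also have "\<dots> = ennreal (gd (a + b) r x)"
      proof -
        have "C * (x powr (a + b - 1) * Beta b a) = gd (a + b) r x"
        proof -
          have ab: "a + b > 0" using a b by simp
          have "Gamma a \<noteq> 0" using Gamma_real_pos[OF a] by linarith
          moreover have "Gamma b \<noteq> 0" using Gamma_real_pos[OF b] by linarith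
          moreover have "Gamma (a + b) \<noteq> 0" using Gamma_real_pos[OF ab] by linarith
          ultimately
          show ?thesis using a b r True unfolding C_def gd_def gk_def Beta_def
            by (simp add: powr_add field_simps)
        qed
        then show ?thesis using C by (simp add: ennreal_mult'[symmetric])
      qed
      finally show ?thesis .
    qed
  qed
  finally show ?thesis by (simp add: gm_def)
qed




lemma prob_space_conv:
  fixes N M :: "real measure"
  assumes "prob_space N" "prob_space M"
    and [measurable_cong]: "sets N = sets borel" "sets M = sets borel"
  shows "prob_space (N \<star> M)"
proof -
  interpret N: prob_space N by fact
  interpret M: prob_space M by fact
  interpret pair_prob_space N M ..
  show ?thesis unfolding convolution_def by (rule prob_space_distr) measurable
qed

lemma cpow_prob:
  fixes \<rho> :: "real measure"
  assumes "prob_space \<rho>" "sets \<rho> = sets borel"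
  shows "prob_space (conv_pow \<rho> n) \<and> sets (conv_pow \<rho> n) = sets borel"
  by (induction n) (auto simp: assms prob_space_conv prob_space_return)

lemma cpow_add:
  fixes \<rho> :: "real measure"
  assumes "prob_space \<rho>" "sets \<rho> = sets borel"
  shows "conv_pow \<rho> m \<star> conv_pow \<rho> n = conv_pow \<rho> (m + n)"
proof (induction m)
  case 0
  have "finite_measure (conv_pow \<rho> n)" "sets (conv_pow \<rho> n) = sets borel"
    using cpow_prob[OF assms, of n] by (auto simp: prob_space.finite_measure)
  then show ?case
    by (simp add: convolution_commutative[of "return borel 0"] finite_measure_return0 conv_return0)
next
  case (Suc m)
  have f: "\<And>k. finite_measure (conv_pow \<rho> k)" "\<And>k. sets (conv_pow \<rho> k) = sets borel"
    using cpow_prob[OF assms] by (auto simp: prob_space.finite_measure)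
  have "finite_measure \<rho>" using assms by (simp add: prob_space.finite_measure)
  then show ?case using Suc[symmetric] f assms
    by (simp add: convolution_associative)
qed

lemma cpow_nn_mult:
  fixes \<rho> :: "real measure" and f :: "real \<Rightarrow> ennreal"
  assumes "prob_space \<rho>" "sets \<rho> = sets borel"
  assumes f[measurable]: "f \<in> borel_measurable borel" and fmult: "\<And>x y. f (x + y) = f x * f y"
    and f0: "f 0 = 1"
  shows "(\<integral>\<^sup>+x. f x \<partial>conv_pow \<rho> n) = (\<integral>\<^sup>+x. f x \<partial>\<rho>) ^ n"
proof (induction n)
  case 0
  then show ?case by (simp add: nn_integral_return f0)
next
  case (Suc n)
  have fm: "finite_measure (conv_pow \<rho> n)" "sets (conv_pow \<rho> n) = sets borel"
    using cpow_prob[OF assms(1,2), of n] by (auto simp: prob_space.finite_measure)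
  have fr: "finite_measure \<rho>" using assms by (simp add: prob_space.finite_measure)
  have "(\<integral>\<^sup>+x. f x \<partial>conv_pow \<rho> (Suc n)) = (\<integral>\<^sup>+x. \<integral>\<^sup>+y. f (x + y) \<partial>conv_pow \<rho> n \<partial>\<rho>)"
    using fm fr assms by (simp add: nn_integral_convolution)
  also have "\<dots> = (\<integral>\<^sup>+x. f x * (\<integral>\<^sup>+y. f y \<partial>conv_pow \<rho> n) \<partial>\<rho>)"
    unfolding fmult by (intro nn_integral_cong nn_integral_cmult) (use fm in simp)
  also have "\<dots> = (\<integral>\<^sup>+x. f x \<partial>\<rho>) * (\<integral>\<^sup>+y. f y \<partial>conv_pow \<rho> n)"
    by (rule nn_integral_multc) (use assms in simp)
  finally show ?case using Suc by simp
qed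

lemma pmf_swap:
  fixes Q :: "nat pmf"
  assumes "\<And>n. (\<lambda>x. F x n) \<in> borel_measurable M"
  shows "(\<integral>\<^sup>+x. \<integral>\<^sup>+n. F x n \<partial>measure_pmf Q \<partial>M) = (\<integral>\<^sup>+n. \<integral>\<^sup>+x. F x n \<partial>M \<partial>measure_pmf Q)"
proof -
  have "(\<integral>\<^sup>+x. \<integral>\<^sup>+n. F x n \<partial>measure_pmf Q \<partial>M) = (\<integral>\<^sup>+x. (\<Sum>n. ennreal (pmf Q n) * F x n) \<partial>M)"
    by (simp add: nn_integral_measure_pmf nn_integral_count_space_nat)
  also have "\<dots> = (\<Sum>n. \<integral>\<^sup>+x. ennreal (pmf Q n) * F x n \<partial>M)"
    by (rule nn_integral_suminf) (use assms in simp)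
  also have "\<dots> = (\<Sum>n. ennreal (pmf Q n) * \<integral>\<^sup>+x. F x n \<partial>M)"
    by (intro suminf_cong nn_integral_cmult assms)
  also have "\<dots> = (\<integral>\<^sup>+n. \<integral>\<^sup>+x. F x n \<partial>M \<partial>measure_pmf Q)"
    by (simp add: nn_integral_measure_pmf nn_integral_count_space_nat)
  finally show ?thesis .
qed

lemma meas_shift_int:
  fixes N :: "real measure"
  assumes "finite_measure N" "sets N = sets borel" "A \<in> sets borel"
  shows "(\<lambda>x. \<integral>\<^sup>+y. indicator A (x + y) \<partial>N) \<in> borel_measurable borel"
proof -
  interpret finite_measure N by fact
  have [measurable]: "A \<in> sets borel" by fact
  have [measurable_cong]: "sets N = sets borel" by fact
  show ?thesis by measurable
qed

definition cp :: "nat pmf \<Rightarrow> real measure \<Rightarrow> real measure" where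
  "cp P \<rho> = measure_pmf P \<bind> conv_pow \<rho>"

context
  fixes \<rho> :: "real measure"
  assumes rho: "prob_space \<rho>" "sets \<rho> = sets borel"
begin

lemma cp_kernel: "conv_pow \<rho> \<in> measurable (measure_pmf P) (subprob_algebra borel)"
  using cpow_prob[OF rho] by (auto simp: space_subprob_algebra prob_space_imp_subprob_space)

lemma sets_cp[simp]: "sets (cp P \<rho>) = sets borel"
  unfolding cp_def using cpow_prob[OF rho] by (subst sets_bind) auto

lemma cp_nn:
  assumes [measurable]: "f \<in> borel_measurable borel"
  shows "(\<integral>\<^sup>+x. f x \<partial>cp P \<rho>) = (\<integral>\<^sup>+n. \<integral>\<^sup>+x. f x \<partial>conv_pow \<rho> n \<partial>measure_pmf P)"
  unfolding cp_def by (rule nn_integral_bind[OF _ cp_kernel]) simp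

lemma cp_emeasure:
  assumes "A \<in> sets borel"
  shows "emeasure (cp P \<rho>) A = (\<integral>\<^sup>+n. emeasure (conv_pow \<rho> n) A \<partial>measure_pmf P)"
proof -
  have "emeasure (cp P \<rho>) A = (\<integral>\<^sup>+x. indicator A x \<partial>cp P \<rho>)"
    using assms by simp
  also have "\<dots> = (\<integral>\<^sup>+n. \<integral>\<^sup>+x. indicator A x \<partial>conv_pow \<rho> n \<partial>measure_pmf P)"
    using assms by (intro cp_nn) simp
  also have "\<dots> = (\<integral>\<^sup>+n. emeasure (conv_pow \<rho> n) A \<partial>measure_pmf P)"
    using assms cpow_prob[OF rho] by (intro nn_integral_cong) simp
  finally show ?thesis .
qed

lemma cp_prob: "prob_space (cp P \<rho>)"
proof
  have "emeasure (cp P \<rho>) (space (cp P \<rho>)) = (\<integral>\<^sup>+x. 1 \<partial>cp P \<rho>)"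
    by simp
  also have "\<dots> = (\<integral>\<^sup>+n. \<integral>\<^sup>+x. 1 \<partial>conv_pow \<rho> n \<partial>measure_pmf P)"
    by (rule cp_nn) simp
  also have "\<dots> = (\<integral>\<^sup>+n. 1 \<partial>measure_pmf P)"
    using cpow_prob[OF rho] by (intro nn_integral_cong) (simp add: prob_space.emeasure_space_1)
  also have "\<dots> = 1" by simp
  finally show "emeasure (cp P \<rho>) (space (cp P \<rho>)) = 1" .
qed

lemma cp_conv:
  "cp P \<rho> \<star> cp Q \<rho> = cp (map_pmf (\<lambda>(m, n). m + n) (pair_pmf P Q)) \<rho>"
proof (rule measure_eqI)
  fix A assume "A \<in> sets (cp P \<rho> \<star> cp Q \<rho>)"
  then have A[measurable]: "A \<in> sets borel" by simp
  have fP: "finite_measure (cp P \<rho>)" "finite_measure (cp Q \<rho>)"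
    using cp_prob by (auto simp: prob_space.finite_measure)
  have fk: "\<And>k. finite_measure (conv_pow \<rho> k)" "\<And>k. sets (conv_pow \<rho> k) = sets borel"
    using cpow_prob[OF rho] by (auto simp: prob_space.finite_measure)
  have "emeasure (cp P \<rho> \<star> cp Q \<rho>) A = (\<integral>\<^sup>+x. \<integral>\<^sup>+y. indicator A (x + y) \<partial>cp Q \<rho> \<partial>cp P \<rho>)"
    using fP by (intro convolution_emeasure') auto
  also have "\<dots> = (\<integral>\<^sup>+m. \<integral>\<^sup>+x. \<integral>\<^sup>+y. indicator A (x + y) \<partial>cp Q \<rho> \<partial>conv_pow \<rho> m \<partial>measure_pmf P)"
    by (rule cp_nn) (rule meas_shift_int[OF fP(2) sets_cp A])
  also have "\<dots> = (\<integral>\<^sup>+m. \<integral>\<^sup>+x. \<integral>\<^sup>+n. \<integral>\<^sup>+y. indicator A (x + y) \<partial>conv_pow \<rho> n \<partial>measure_pmf Q \<partial>conv_pow \<rho> m \<partial>measure_pmf P)"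
    by (intro nn_integral_cong cp_nn) simp
  also have "\<dots> = (\<integral>\<^sup>+m. \<integral>\<^sup>+n. \<integral>\<^sup>+x. \<integral>\<^sup>+y. indicator A (x + y) \<partial>conv_pow \<rho> n \<partial>conv_pow \<rho> m \<partial>measure_pmf Q \<partial>measure_pmf P)"
  proof (intro nn_integral_cong pmf_swap)
    fix m n
    show "(\<lambda>x. \<integral>\<^sup>+y. indicator A (x + y) \<partial>conv_pow \<rho> n) \<in> borel_measurable (conv_pow \<rho> m)"
      using meas_shift_int[OF fk(1) fk(2) A, of n] fk(2)[of m] by simp
  qed
  also have "\<dots> = (\<integral>\<^sup>+m. \<integral>\<^sup>+n. emeasure (conv_pow \<rho> (m + n)) A \<partial>measure_pmf Q \<partial>measure_pmf P)"
    by (intro nn_integral_cong) (simp add: convolution_emeasure'[symmetric] fk cpow_add[OF rho])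
  also have "\<dots> = (\<integral>\<^sup>+k. emeasure (conv_pow \<rho> k) A \<partial>measure_pmf (map_pmf (\<lambda>(m, n). m + n) (pair_pmf P Q)))"
    by (simp add: nn_integral_pair_pmf')
  also have "\<dots> = emeasure (cp (map_pmf (\<lambda>(m, n). m + n) (pair_pmf P Q)) \<rho>) A"
    by (rule cp_emeasure[symmetric]) simp
  finally show "emeasure (cp P \<rho> \<star> cp Q \<rho>) A = emeasure (cp (map_pmf (\<lambda>(m, n). m + n) (pair_pmf P Q)) \<rho>) A" .
qed simp

end




definition pz :: "real \<Rightarrow> nat pmf" where
  "pz l = (if l > 0 then poisson_pmf l else return_pmf 0)"

lemma pmf_pz: "l \<ge> 0 \<Longrightarrow> pmf (pz l) k = l ^ k / fact k * exp (- l)"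
  by (cases "l > 0") (auto simp: pz_def indicator_def)

lemma pz_add:
  assumes a: "a \<ge> 0" and b: "b \<ge> 0"
  shows "map_pmf (\<lambda>(m, n). m + n) (pair_pmf (pz a) (pz b)) = pz (a + b)"
proof (rule pmf_eqI)
  fix k :: nat
  have S: "(\<lambda>(m, n). m + n) -` {k} = (\<lambda>m. (m, k - m)) ` {..k}"
    by (auto simp: image_iff)
  have inj: "inj_on (\<lambda>m. (m, k - m)) {..k}" by (auto simp: inj_on_def)
  have "pmf (map_pmf (\<lambda>(m, n). m + n) (pair_pmf (pz a) (pz b))) k =
        (\<Sum>m\<le>k. pmf (pz a) m * pmf (pz b) (k - m))"
    unfolding pmf_map S
    by (subst measure_measure_pmf_finite) (auto simp: sum.reindex[OF inj] pmf_pair)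
  also have "\<dots> = (\<Sum>m\<le>k. of_nat (k choose m) * a ^ m * b ^ (k - m)) / fact k * exp (- (a + b))"
    unfolding sum_divide_distrib sum_distrib_right
  proof (intro sum.cong refl)
    fix m assume m: "m \<in> {..k}"
    then have "of_nat (k choose m) = (fact k / (fact m * fact (k - m)) :: real)"
      by (intro binomial_fact) simp
    then show "pmf (pz a) m * pmf (pz b) (k - m) = of_nat (k choose m) * a ^ m * b ^ (k - m) / fact k * exp (- (a + b))"
      using a b by (simp add: pmf_pz exp_add[symmetric] field_simps)
  qed
  also have "\<dots> = pmf (pz (a + b)) k"
    using a b by (simp add: pmf_pz binomial_ring[of a b k] mult_ac)
  finally show "pmf (map_pmf (\<lambda>(m, n). m + n) (pair_pmf (pz a) (pz b))) k = pmf (pz (a + b)) k" .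
qed

lemma cp_pz_laplace:
  fixes \<rho> :: "real measure" and f :: "real \<Rightarrow> real"
  assumes rho: "prob_space \<rho>" "sets \<rho> = sets borel"
  assumes f[measurable]: "f \<in> borel_measurable borel" and fmult: "\<And>x y. f (x + y) = f x * f y"
    and f0: "f 0 = 1" and fnn: "\<And>x. f x \<ge> 0"
    and L: "(\<integral>\<^sup>+x. ennreal (f x) \<partial>\<rho>) = ennreal L" and Lnn: "L \<ge> 0" and l: "l \<ge> 0"
  shows "(\<integral>\<^sup>+x. ennreal (f x) \<partial>cp (pz l) \<rho>) = ennreal (exp (l * L - l))"
proof -
  have "(\<integral>\<^sup>+x. ennreal (f x) \<partial>cp (pz l) \<rho>) = (\<integral>\<^sup>+n. \<integral>\<^sup>+x. ennreal (f x) \<partial>conv_pow \<rho> n \<partial>measure_pmf (pz l))"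
    by (rule cp_nn[OF rho]) simp
  also have "\<dots> = (\<integral>\<^sup>+n. ennreal L ^ n \<partial>measure_pmf (pz l))"
    by (intro nn_integral_cong)
       (simp add: cpow_nn_mult[OF rho, of "\<lambda>x. ennreal (f x)"] fmult f0 fnn ennreal_mult'' L)
  also have "\<dots> = (\<Sum>n. ennreal (pmf (pz l) n) * ennreal L ^ n)"
    by (simp add: nn_integral_measure_pmf nn_integral_count_space_nat)
  also have "\<dots> = (\<Sum>n. ennreal (exp (- l) * ((l * L) ^ n / fact n)))"
    by (intro suminf_cong) (simp add: pmf_pz l Lnn ennreal_power ennreal_mult'[symmetric] power_mult_distrib field_simps)
  also have "\<dots> = ennreal (\<Sum>n. exp (- l) * ((l * L) ^ n / fact n))"
  proof (rule suminf_ennreal2)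
    show "\<And>n. 0 \<le> exp (- l) * ((l * L) ^ n / fact n)" using l Lnn by simp
    show "summable (\<lambda>n. exp (- l) * ((l * L) ^ n / fact n))"
      by (intro summable_mult) (use exp_converges[of "l * L"] in \<open>simp add: sums_iff divide_inverse mult.commute\<close>)
  qed
  also have "(\<Sum>n. exp (- l) * ((l * L) ^ n / fact n)) = exp (- l) * exp (l * L)"
    using exp_converges[of "l * L"] by (subst suminf_mult) (auto simp: sums_iff divide_inverse mult.commute)
  also have "\<dots> = exp (l * L - l)" by (simp add: exp_add[symmetric])
  finally show ?thesis .
qed

lemma AE_conv_nonneg:
  fixes N M :: "real measure"
  assumes "finite_measure N" "finite_measure M" "sets N = sets borel" "sets M = sets borel"
    and "AE x in N. x \<ge> 0" "AE x in M. x \<ge> 0"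
  shows "AE x in N \<star> M. x \<ge> 0"
proof -
  have A: "{x::real. x < 0} \<in> sets borel" by measurable
  have "emeasure (N \<star> M) {x. x < 0} = (\<integral>\<^sup>+x. \<integral>\<^sup>+y. indicator {x. x < 0} (x + y) \<partial>M \<partial>N)"
    using assms A by (intro convolution_emeasure') auto
  also have "\<dots> = (\<integral>\<^sup>+x. 0 \<partial>N)"
  proof (intro nn_integral_cong_AE)
    show "AE x in N. (\<integral>\<^sup>+y. indicator {x. x < 0} (x + y) \<partial>M) = 0"
      using assms(5)
    proof eventually_elim
      case (elim x)
      have "AE y in M. indicator {x. x < 0} (x + y) = (0::ennreal)"
        using assms(6) by eventually_elim (use elim in \<open>auto simp: indicator_def\<close>)
      then have "(\<integral>\<^sup>+y. indicator {x. x < 0} (x + y) \<partial>M) = (\<integral>\<^sup>+y. 0 \<partial>M)"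
        by (intro nn_integral_cong_AE) auto
      then show ?case by simp
    qed
  qed
  finally have "emeasure (N \<star> M) {x. x < 0} = 0" by simp
  then show ?thesis
    by (intro AE_I[where N="{x. x < 0}"]) (auto simp: A)
qed

lemma cpow_AE:
  fixes \<rho> :: "real measure"
  assumes rho: "prob_space \<rho>" "sets \<rho> = sets borel" and ae: "AE x in \<rho>. x \<ge> 0"
  shows "AE x in conv_pow \<rho> n. x \<ge> 0"
proof (induction n)
  case 0 then show ?case by (subst conv_pow.simps, subst AE_return) auto
next
  case (Suc n)
  have "finite_measure (conv_pow \<rho> n)" "sets (conv_pow \<rho> n) = sets borel"
    using cpow_prob[OF rho, of n] by (auto simp: prob_space.finite_measure)
  then show ?case unfolding conv_pow.simps using Suc rho ae
    by (intro AE_conv_nonneg) (auto simp: prob_space.finite_measure)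
qed

lemma cp_AE:
  fixes \<rho> :: "real measure"
  assumes rho: "prob_space \<rho>" "sets \<rho> = sets borel" and ae: "AE x in \<rho>. x \<ge> 0"
  shows "AE x in cp P \<rho>. x \<ge> 0"
proof -
  have A: "{x::real. x < 0} \<in> sets borel" by measurable
  have "emeasure (cp P \<rho>) {x. x < 0} = (\<integral>\<^sup>+n. emeasure (conv_pow \<rho> n) {x. x < 0} \<partial>measure_pmf P)"
    by (rule cp_emeasure[OF rho A])
  also have "\<dots> = (\<integral>\<^sup>+n. 0 \<partial>measure_pmf P)"
  proof (intro nn_integral_cong)
    fix n
    have "AE x in conv_pow \<rho> n. x \<ge> 0" by (rule cpow_AE[OF rho ae])
    moreover have "space (conv_pow \<rho> n) = UNIV"
      using cpow_prob[OF rho, of n] sets_eq_imp_space_eq[of "conv_pow \<rho> n" borel] by simp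
    ultimately show "emeasure (conv_pow \<rho> n) {x. x < 0} = 0"
      using cpow_prob[OF rho, of n] A
      by (subst AE_iff_measurable[symmetric, where P="\<lambda>x. x \<ge> 0"]) (auto simp: not_le)
  qed
  finally show ?thesis
    using A by (intro AE_I[where N="{x. x < 0}"]) (auto simp: sets_cp[OF rho])
qed




definition Gm :: "real \<Rightarrow> real \<Rightarrow> real measure" where
  "Gm a r = (if a > 0 then gm a r else return borel 0)"

lemma Gm_basic:
  assumes "a \<ge> 0" "r > 0"
  shows "prob_space (Gm a r) \<and> sets (Gm a r) = sets borel \<and> (AE y in Gm a r. y \<ge> 0)"
proof (cases "a > 0")
  case True then show ?thesis using assms gm_prob[of a r] gm_AE[of a r] unfolding Gm_def by simp
next
  case False then show ?thesis unfolding Gm_def by (simp add: prob_space_return AE_return)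
qed

lemma Gm_conv:
  assumes "a \<ge> 0" "b \<ge> 0" "r > 0"
  shows "(Gm a r \<star> Gm b r) = Gm (a + b) r"
proof -
  consider "a > 0" "b > 0" | "a = 0" | "b = 0" using assms by linarith
  then show ?thesis
  proof cases
    case 1 then show ?thesis using assms by (simp add: Gm_def gm_conv)
  next
    case 2
    have "(Gm a r \<star> Gm b r) = (Gm b r \<star> Gm a r)"
      using Gm_basic[of a r] Gm_basic[of b r] assms
      by (intro convolution_commutative) (auto simp: prob_space.finite_measure)
    also have "\<dots> = Gm b r"
      using 2 Gm_basic[of b r] assms
      by (simp add: Gm_def[of 0] conv_return0 prob_space.finite_measure)
    finally show ?thesis using 2 by simp
  next
    case 3
    then show ?thesis
      using Gm_basic[of a r] assms
      by (simp add: Gm_def[of 0] conv_return0 prob_space.finite_measure)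
  qed
qed

lemma Gm_laplace:
  assumes "a \<ge> 0" "r > 0" "r + s > 0"
  shows "(\<integral>\<^sup>+y. ennreal (exp (- s * y)) \<partial>Gm a r) = ennreal ((r / (r + s)) powr a)"
  using assms gm_laplace[of a r s] by (auto simp: Gm_def nn_integral_return)

lemma conv_swap4:
  fixes A B C D :: "real measure"
  assumes "finite_measure A" "finite_measure B" "finite_measure C" "finite_measure D"
    "sets A = sets borel" "sets B = sets borel" "sets C = sets borel" "sets D = sets borel"
  shows "((A \<star> B) \<star> (C \<star> D)) = ((A \<star> C) \<star> (B \<star> D))"
proof -
  have f: "finite_measure (B \<star> (C \<star> D))" "finite_measure (C \<star> D)" "finite_measure (B \<star> C)"
    "finite_measure (C \<star> B)" "finite_measure (B \<star> D)"
    using assms by (auto intro!: convolution_finite)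
  have "((A \<star> B) \<star> (C \<star> D)) = (A \<star> (B \<star> (C \<star> D)))"
    using assms f by (subst convolution_associative) auto
  also have "(B \<star> (C \<star> D)) = ((B \<star> C) \<star> D)" using assms by (subst convolution_associative) auto
  also have "(B \<star> C) = (C \<star> B)" using assms by (intro convolution_commutative) auto
  also have "((C \<star> B) \<star> D) = (C \<star> (B \<star> D))" using assms by (subst convolution_associative) auto
  also have "(A \<star> (C \<star> (B \<star> D))) = ((A \<star> C) \<star> (B \<star> D))"
    using assms f by (subst convolution_associative) auto
  finally show ?thesis .
qed

lemma semigroup_conv_pow:
  fixes F :: "real \<Rightarrow> real measure"
  assumes basic: "\<And>t. t > 0 \<Longrightarrow> prob_space (F t) \<and> sets (F t) = sets borel"
    and semi: "\<And>t u. t > 0 \<Longrightarrow> u > 0 \<Longrightarrow> (F t \<star> F u) = F (t + u)"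
    and n: "n \<ge> 1"
  shows "conv_pow (F (1 / real n)) n = F 1"
proof -
  have np: "1 / real n > 0" using n by simp
  have "conv_pow (F (1 / real n)) (Suc k) = F (real (Suc k) / real n)" for k
  proof (induction k)
    case 0
    have "conv_pow (F (1 / real n)) (Suc 0) = (F (1 / real n) \<star> return borel 0)" by simp
    also have "\<dots> = F (1 / real n)"
      using basic[OF np] by (intro conv_return0) (auto simp: prob_space.finite_measure)
    finally show ?case by simp
  next
    case (Suc k)
    have "conv_pow (F (1 / real n)) (Suc (Suc k)) = (F (1 / real n) \<star> F (real (Suc k) / real n))"
      using Suc by simp
    also have "\<dots> = F (1 / real n + real (Suc k) / real n)"
      using n by (intro semi) auto
    also have "1 / real n + real (Suc k) / real n = real (Suc (Suc k)) / real n"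
      using n by (simp add: field_simps)
    finally show ?case .
  qed
  from this[of "n - 1"] n show ?thesis by simp
qed

lemma assembly:
  fixes R Lr :: "real \<Rightarrow> real" and S :: "real set" and d r l :: real and \<rho> :: "real measure"
  assumes d: "d \<ge> 0" and r: "r > 0" and l: "l \<ge> 0"
    and rho: "prob_space \<rho>" "sets \<rho> = sets borel" "AE y in \<rho>. y \<ge> 0"
    and Lap: "\<And>s. s \<in> S \<Longrightarrow> r + s > 0 \<and> Lr s \<ge> 0 \<and>
        (\<integral>\<^sup>+y. ennreal (exp (- s * y)) \<partial>\<rho>) = ennreal (Lr s) \<and>
        R s = (r / (r + s)) powr d * exp (l * Lr s - l)"
  shows "\<exists>M :: real measure. prob_space M \<and> sets M = sets borel \<and> (AE x in M. 0 \<le> x \<and> x \<le> 1) \<and>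
     (\<forall>s\<in>S. integrable M (\<lambda>x. x powr s) \<and> (\<integral>x. x powr s \<partial>M) = R s) \<and>
     infinitely_divisible (distr M borel ln) \<and>
     (\<forall>c. (\<forall>n::nat. real n \<in> S) \<longrightarrow> (\<lambda>n. R (real n)) \<longlonglongrightarrow> c \<longrightarrow> measure M {1} = c)"
proof -
  define F where "F t = (Gm (d * t) r \<star> cp (pz (t * l)) \<rho>)" for t
  have basic: "prob_space (F t) \<and> sets (F t) = sets borel \<and> (AE y in F t. y \<ge> 0)" if t: "t > 0" for t
  proof -
    have g: "prob_space (Gm (d * t) r)" "sets (Gm (d * t) r) = sets borel" "AE y in Gm (d * t) r. y \<ge> 0"
      using Gm_basic[of "d * t" r] d t r by auto
    have c: "prob_space (cp (pz (t * l)) \<rho>)" "sets (cp (pz (t * l)) \<rho>) = sets borel"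
        "AE y in cp (pz (t * l)) \<rho>. y \<ge> 0"
      using cp_prob[OF rho(1,2)] sets_cp[OF rho(1,2)] cp_AE[OF rho] by auto
    show ?thesis unfolding F_def using g c
      by (auto intro!: prob_space_conv AE_conv_nonneg simp: prob_space.finite_measure)
  qed
  have semi: "(F t \<star> F u) = F (t + u)" if t: "t > 0" and u: "u > 0" for t u
  proof -
    have g: "\<And>t. t > 0 \<Longrightarrow> prob_space (Gm (d * t) r) \<and> sets (Gm (d * t) r) = sets borel"
      using Gm_basic d r by auto
    have c: "\<And>t. prob_space (cp (pz (t * l)) \<rho>) \<and> sets (cp (pz (t * l)) \<rho>) = sets borel"
      using cp_prob[OF rho(1,2)] sets_cp[OF rho(1,2)] by auto
    have "(F t \<star> F u) = ((Gm (d * t) r \<star> Gm (d * u) r) \<star> (cp (pz (t * l)) \<rho> \<star> cp (pz (u * l)) \<rho>))"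
      unfolding F_def using g[OF t] g[OF u] c[of t] c[of u]
      by (intro conv_swap4) (auto simp: prob_space.finite_measure)
    also have "(Gm (d * t) r \<star> Gm (d * u) r) = Gm (d * (t + u)) r"
      using d t u r by (subst Gm_conv) (auto simp: algebra_simps)
    also have "(cp (pz (t * l)) \<rho> \<star> cp (pz (u * l)) \<rho>) = cp (pz ((t + u) * l)) \<rho>"
      using t u l by (simp add: cp_conv[OF rho(1,2)] pz_add algebra_simps)
    finally show ?thesis unfolding F_def .
  qed
  define \<mu> where "\<mu> = F 1"
  have mu: "prob_space \<mu>" "sets \<mu> = sets borel" "AE y in \<mu>. y \<ge> 0"
    using basic[of 1] unfolding \<mu>_def by auto
  have [measurable_cong]: "sets \<mu> = sets borel" by (rule mu(2))
  have lap: "(\<integral>\<^sup>+y. ennreal (exp (- s * y)) \<partial>\<mu>) = ennreal (R s)" if s: "s \<in> S" for s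
  proof -
    note Ls = Lap[OF s]
    have g: "prob_space (Gm d r)" "sets (Gm d r) = sets borel" using Gm_basic[of d r] d r by auto
    have c: "prob_space (cp (pz l) \<rho>)" "sets (cp (pz l) \<rho>) = sets borel"
      using cp_prob[OF rho(1,2)] sets_cp[OF rho(1,2)] by auto
    have "(\<integral>\<^sup>+y. ennreal (exp (- s * y)) \<partial>\<mu>) =
        (\<integral>\<^sup>+x. \<integral>\<^sup>+y. ennreal (exp (- s * (x + y))) \<partial>cp (pz l) \<rho> \<partial>Gm d r)"
      unfolding \<mu>_def F_def using g c by (simp add: nn_integral_convolution prob_space.finite_measure)
    also have "\<dots> = (\<integral>\<^sup>+x. ennreal (exp (- s * x)) * (\<integral>\<^sup>+y. ennreal (exp (- s * y)) \<partial>cp (pz l) \<rho>) \<partial>Gm d r)"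
    proof (intro nn_integral_cong)
      fix x
      have "(\<integral>\<^sup>+y. ennreal (exp (- s * (x + y))) \<partial>cp (pz l) \<rho>) =
            (\<integral>\<^sup>+y. ennreal (exp (- s * x)) * ennreal (exp (- s * y)) \<partial>cp (pz l) \<rho>)"
        by (intro nn_integral_cong) (simp add: ennreal_mult[symmetric] exp_add[symmetric] algebra_simps)
      also have "\<dots> = ennreal (exp (- s * x)) * (\<integral>\<^sup>+y. ennreal (exp (- s * y)) \<partial>cp (pz l) \<rho>)"
        by (rule nn_integral_cmult) (use c in simp)
      finally show "(\<integral>\<^sup>+y. ennreal (exp (- s * (x + y))) \<partial>cp (pz l) \<rho>) =
            ennreal (exp (- s * x)) * (\<integral>\<^sup>+y. ennreal (exp (- s * y)) \<partial>cp (pz l) \<rho>)" .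
    qed
    also have "\<dots> = (\<integral>\<^sup>+x. ennreal (exp (- s * x)) \<partial>Gm d r) * (\<integral>\<^sup>+y. ennreal (exp (- s * y)) \<partial>cp (pz l) \<rho>)"
      by (rule nn_integral_multc) (use g in simp)
    also have "(\<integral>\<^sup>+x. ennreal (exp (- s * x)) \<partial>Gm d r) = ennreal ((r / (r + s)) powr d)"
      using Gm_laplace[of d r s] d r Ls by auto
    also have "(\<integral>\<^sup>+y. ennreal (exp (- s * y)) \<partial>cp (pz l) \<rho>) = ennreal (exp (l * Lr s - l))"
      by (rule cp_pz_laplace[OF rho(1,2)]) (use Ls l in \<open>auto simp: exp_add[symmetric] algebra_simps\<close>)
    finally show ?thesis using Ls by (simp add: ennreal_mult[symmetric])
  qed
  define M where "M = distr \<mu> borel (\<lambda>y. exp (- y))"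
  have M: "prob_space M" "sets M = sets borel"
    unfolding M_def using mu by (auto intro!: prob_space.prob_space_distr)
  have [measurable_cong]: "sets M = sets borel" by (rule M(2))
  have pw: "exp (- y) powr s = exp (- s * y)" for y s :: real
    by (simp add: powr_def)
  have mom_nn: "(\<integral>\<^sup>+x. ennreal (x powr s) \<partial>M) = ennreal (R s)" if s: "s \<in> S" for s
    unfolding M_def using lap[OF s] by (subst nn_integral_distr) (auto simp: pw)
  have Rnn: "R s \<ge> 0" if "s \<in> S" for s using Lap[OF that] by simp
  have moments: "integrable M (\<lambda>x. x powr s) \<and> (\<integral>x. x powr s \<partial>M) = R s" if s: "s \<in> S" for s
  proof
    show "integrable M (\<lambda>x. x powr s)"
      by (rule integrableI_nonneg) (auto simp: mom_nn[OF s])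
    show "(\<integral>x. x powr s \<partial>M) = R s"
      by (subst integral_eq_nn_integral) (auto simp: mom_nn[OF s] Rnn[OF s])
  qed
  have AE01: "AE x in M. 0 \<le> x \<and> x \<le> 1"
    unfolding M_def using mu(3)
    by (subst AE_distr_iff) auto
  have ln_eq: "distr M borel ln = distr \<mu> borel uminus"
    unfolding M_def by (subst distr_distr) (auto simp: o_def intro!: distr_cong)
  have infdiv: "infinitely_divisible (distr M borel ln)"
    unfolding infinitely_divisible_def
  proof (intro allI impI)
    fix n :: nat assume n: "n \<ge> 1"
    have np: "1 / real n > 0" using n by simp
    have b: "prob_space (F (1 / real n))" "sets (F (1 / real n)) = sets borel" using basic[OF np] by auto
    have "conv_pow (distr (F (1 / real n)) borel uminus) n = distr (conv_pow (F (1 / real n)) n) borel uminus"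
      using conv_pow_neg[of "F (1 / real n)" n] b by (simp add: prob_space.finite_measure)
    also have "conv_pow (F (1 / real n)) n = \<mu>"
      unfolding \<mu>_def using basic semi n by (intro semigroup_conv_pow) auto
    finally have "distr M borel ln = conv_pow (distr (F (1 / real n)) borel uminus) n"
      using ln_eq by simp
    moreover have "prob_space (distr (F (1 / real n)) borel uminus)"
      using b by (intro prob_space.prob_space_distr) auto
    ultimately show "\<exists>\<nu>. prob_space \<nu> \<and> sets \<nu> = sets borel \<and> distr M borel ln = conv_pow \<nu> n"
      by auto
  qed
  have atom: "measure M {1} = c" if S: "\<forall>n::nat. real n \<in> S" and c: "(\<lambda>n. R (real n)) \<longlonglongrightarrow> c" for c
  proof -
    interpret M: prob_space M by (rule M(1))
    have "(\<lambda>n. \<integral>x. x powr real n \<partial>M) \<longlonglongrightarrow> (\<integral>x. indicator {1} x \<partial>M)"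
    proof (rule integral_dominated_convergence[where w="\<lambda>_. 1"])
      show "AE x in M. (\<lambda>n. x powr real n) \<longlonglongrightarrow> indicator {1} x"
        using AE01
      proof eventually_elim
        case (elim x)
        show ?case
        proof (cases "x = 0 \<or> x = 1")
          case True then show ?thesis by auto
        next
          case False
          then have x: "0 < x" "x < 1" using elim by auto
          then have "(\<lambda>n. x ^ n) \<longlonglongrightarrow> 0" by (intro LIMSEQ_power_zero) auto
          then show ?thesis using x by (simp add: powr_realpow)
        qed
      qed
      show "\<And>n. AE x in M. norm (x powr real n) \<le> 1"
        using AE01 by eventually_elim (auto intro!: powr_le1)
    qed auto
    moreover have "(\<lambda>n. \<integral>x. x powr real n \<partial>M) = (\<lambda>n. R (real n))"
      using moments S by auto
    moreover have "(\<integral>x. indicator {1} x \<partial>M) = measure M {1}"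
      by simp
    ultimately show ?thesis using c LIMSEQ_unique by metis
  qed
  show ?thesis
    using M AE01 moments infdiv atom by blast
qed




definition fr :: "real \<Rightarrow> real \<Rightarrow> real \<Rightarrow> real" where
  "fr u v t = (if t > 0 then (exp (- u * t) - exp (- v * t)) / t else 0)"

lemma fr_measurable[measurable]: "fr u v \<in> borel_measurable borel"
  unfolding fr_def by measurable

lemma exp_inner_integral:
  assumes t: "t > 0" and uv: "u \<le> v"
  shows "(\<integral>\<^sup>+w. ennreal (exp (- w * t)) * indicator {u..v} w \<partial>lborel) = ennreal ((exp (- u * t) - exp (- v * t)) / t)"
proof -
  have "((\<lambda>w. exp (- w * t)) has_integral ((\<lambda>w. - exp (- w * t) / t) v - (\<lambda>w. - exp (- w * t) / t) u)) {u..v}"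
  proof (rule fundamental_theorem_of_calculus[OF uv])
    fix w assume "w \<in> {u..v}"
    have "((\<lambda>w. - exp (- w * t) / t) has_real_derivative exp (- w * t)) (at w)"
      using t by (auto intro!: derivative_eq_intros)
    then show "((\<lambda>w. - exp (- w * t) / t) has_vector_derivative exp (- w * t)) (at w within {u..v})"
      by (simp add: has_real_derivative_iff_has_vector_derivative has_vector_derivative_at_within)
  qed
  then have "((\<lambda>w. exp (- w * t)) has_integral ((exp (- u * t) - exp (- v * t)) / t)) {u..v}"
    by (simp add: diff_divide_distrib)
  from nn_integral_has_integral_lebesgue'[OF _ this] show ?thesis by simp
qed

lemma exp_outer_integral:
  assumes w: "w > 0"
  shows "(\<integral>\<^sup>+t. ennreal (exp (- w * t)) * indicator {0<..} t \<partial>lborel) = ennreal (1 / w)"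
proof -
  have "(\<integral>\<^sup>+t. ennreal (exp (- w * t)) * indicator {0<..} t \<partial>lborel) = (\<integral>\<^sup>+t. ennreal (gk 1 w t) \<partial>lborel)"
    by (intro nn_integral_cong) (auto simp: gk_def indicator_def)
  also have "\<dots> = ennreal (1 / w)" using nn_integral_gk[of 1 w] w by simp
  finally show ?thesis .
qed

lemma ln_integral:
  assumes u: "u > 0" and uv: "u \<le> v"
  shows "(\<integral>\<^sup>+w. ennreal (1 / w) * indicator {u..v} w \<partial>lborel) = ennreal (ln v - ln u)"
proof -
  have "((\<lambda>w. 1 / w) has_integral (ln v - ln u)) {u..v}"
  proof (rule fundamental_theorem_of_calculus[OF uv])
    fix w assume "w \<in> {u..v}"
    then have "w > 0" using u by auto
    then have "(ln has_real_derivative 1 / w) (at w)"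
      by (auto intro!: derivative_eq_intros)
    then show "(ln has_vector_derivative 1 / w) (at w within {u..v})"
      by (simp add: has_real_derivative_iff_has_vector_derivative has_vector_derivative_at_within)
  qed
  from nn_integral_has_integral_lebesgue'[OF _ this] u show ?thesis by auto
qed

lemma frullani_nn:
  assumes u: "u > 0" and uv: "u \<le> v"
  shows "(\<integral>\<^sup>+t. ennreal (fr u v t) \<partial>lborel) = ennreal (ln v - ln u)"
proof -
  have "(\<integral>\<^sup>+t. ennreal (fr u v t) \<partial>lborel) =
      (\<integral>\<^sup>+t. \<integral>\<^sup>+w. ennreal (exp (- w * t)) * indicator {u..v} w * indicator {0<..} t \<partial>lborel \<partial>lborel)"
  proof (intro nn_integral_cong)
    fix t :: real
    show "ennreal (fr u v t) = (\<integral>\<^sup>+w. ennreal (exp (- w * t)) * indicator {u..v} w * indicator {0<..} t \<partial>lborel)"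
    proof (cases "t > 0")
      case True
      then show ?thesis using exp_inner_integral[OF True uv] by (simp add: fr_def)
    next
      case False
      then show ?thesis by (simp add: fr_def)
    qed
  qed
  also have "\<dots> = (\<integral>\<^sup>+w. \<integral>\<^sup>+t. ennreal (exp (- w * t)) * indicator {u..v} w * indicator {0<..} t \<partial>lborel \<partial>lborel)"
    by (rule lborel_pair.Fubini') measurable
  also have "\<dots> = (\<integral>\<^sup>+w. ennreal (1 / w) * indicator {u..v} w \<partial>lborel)"
  proof (intro nn_integral_cong)
    fix w :: real
    show "(\<integral>\<^sup>+t. ennreal (exp (- w * t)) * indicator {u..v} w * indicator {0<..} t \<partial>lborel) = ennreal (1 / w) * indicator {u..v} w"
    proof (cases "w \<in> {u..v}")
      case True
      then have "w > 0" using u by auto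
      then show ?thesis using True exp_outer_integral[of w] by simp
    next
      case False then show ?thesis by simp
    qed
  qed
  also have "\<dots> = ennreal (ln v - ln u)" by (rule ln_integral[OF u uv])
  finally show ?thesis .
qed

lemma frullani:
  assumes u: "u > 0" and v: "v > 0"
  shows "integrable lborel (fr u v) \<and> (\<integral>t. fr u v t \<partial>lborel) = ln v - ln u"
proof (cases "u \<le> v")
  case True
  have nn: "0 \<le> fr u v t" for t
    using True u by (auto simp: fr_def divide_nonneg_pos)
  have "0 \<le> ln v - ln u" using True u by simp
  then show ?thesis
    using frullani_nn[OF u True] nn_integral_eq_integrable[of "fr u v" lborel "ln v - ln u"] nn by auto
next
  case False
  then have vu: "v \<le> u" by simp
  have nn: "0 \<le> fr v u t" for t
    using vu v by (auto simp: fr_def divide_nonneg_pos)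
  have "0 \<le> ln u - ln v" using vu v by simp
  then have I: "integrable lborel (fr v u) \<and> (\<integral>t. fr v u t \<partial>lborel) = ln u - ln v"
    using frullani_nn[OF v vu] nn_integral_eq_integrable[of "fr v u" lborel "ln u - ln v"] nn by auto
  have eq: "fr u v = (\<lambda>t. - fr v u t)" by (auto simp: fr_def fun_eq_iff field_simps)
  show ?thesis unfolding eq using I by simp
qed




locale params =
  fixes a1 a2 c1 c2 :: real
  assumes a1: "0 < a1" and a12: "a1 \<le> a2" and c1: "0 < c1" and c12: "c1 \<le> c2"
    and ac1: "a1 \<le> c1" and asum: "a1 + a2 \<le> c1 + c2"
begin

definition "dd = c1 + c2 - a1 - a2"
definition "rr = c1 + c2 - a1"
definition "gg t = exp (- a1 * t) + exp (- a2 * t) - exp (- c1 * t) - exp (- c2 * t)"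
definition "GR s = Gamma (a1 + s) * Gamma (a2 + s) * Gamma c1 * Gamma c2 /
                (Gamma a1 * Gamma a2 * Gamma (c1 + s) * Gamma (c2 + s))"
definition "fk (k::nat) s = (a1 + k) * (a2 + k) * (c1 + k + s) * (c2 + k + s) /
                ((a1 + k + s) * (a2 + k + s) * (c1 + k) * (c2 + k))"

lemma dd_nonneg: "dd \<ge> 0" using asum by (simp add: dd_def)
lemma rr_pos: "rr > 0" using a1 ac1 c12 by (simp add: rr_def)
lemma rr_ge: "rr \<ge> a1" "rr \<ge> c2" using a1 ac1 c12 by (auto simp: rr_def)

lemma gg_lower:
  assumes t: "t > 0"
  shows "gg t \<ge> dd * t * exp (- rr * t)"
proof -
  define h where "h = c1 - a1"
  have h: "h \<ge> 0" using ac1 by (simp add: h_def)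
  have e1: "exp (- a1 * t) - exp (- c1 * t) = exp (- a1 * t) * (1 - exp (- h * t))"
    by (simp add: h_def algebra_simps exp_add[symmetric])
  have e2: "exp (- c2 * t) - exp (- rr * t) = exp (- c2 * t) * (1 - exp (- h * t))"
    by (simp add: h_def rr_def algebra_simps exp_add[symmetric])
  have "exp (- h * t) \<le> 1" using h t by (simp add: mult_nonneg_nonneg)
  moreover have "exp (- c2 * t) \<le> exp (- a1 * t)" using ac1 c12 t by (simp add: mult_right_mono)
  ultimately have A: "exp (- a1 * t) - exp (- c1 * t) \<ge> exp (- c2 * t) - exp (- rr * t)"
    unfolding e1 e2 by (intro mult_right_mono) auto
  have eq: "exp (- a2 * t) = exp (- rr * t) * exp (dd * t)"
    by (simp add: rr_def dd_def exp_add[symmetric] algebra_simps)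
  have "exp (- rr * t) * (1 + dd * t) \<le> exp (- rr * t) * exp (dd * t)"
    by (rule mult_left_mono) (auto simp: exp_ge_add_one_self)
  then have B: "exp (- a2 * t) - exp (- rr * t) \<ge> dd * t * exp (- rr * t)"
    unfolding eq by (simp add: algebra_simps)
  show ?thesis using A B by (simp add: gg_def)
qed

lemma gg_nonneg: "t > 0 \<Longrightarrow> gg t \<ge> 0"
proof -
  assume t: "t > 0"
  have "dd * t * exp (- rr * t) \<ge> 0" using dd_nonneg t by simp
  then show ?thesis using gg_lower[OF t] by linarith
qed

lemma Gamma_pos_shift:
  assumes "s > - a1"
  shows "a1 + s > 0" "a2 + s > 0" "c1 + s > 0" "c2 + s > 0"
  using assms a12 ac1 c12 by auto

lemma prod_fk:
  assumes s: "s > - a1"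
  shows "(\<Prod>k<Suc n. fk k s) =
     Gamma_series (a1 + s) n * Gamma_series (a2 + s) n * Gamma_series c1 n * Gamma_series c2 n /
     (Gamma_series a1 n * Gamma_series a2 n * Gamma_series (c1 + s) n * Gamma_series (c2 + s) n)"
proof -
  define L where "L = ln (real n)"
  define P where "P z = pochhammer z (Suc n)" for z :: real
  have Pprod: "P z = (\<Prod>k<Suc n. z + real k)" for z
    unfolding P_def pochhammer_prod by (simp add: atLeast0LessThan)
  have Ppos: "P z > 0" if "z > 0" for z
    unfolding Pprod using that by (intro prod_pos) auto
  note pos = Gamma_pos_shift[OF s] a1 c1
  have a2p: "a2 > 0" using a1 a12 by simp
  have c2p: "c2 > 0" using c1 c12 by simp
  have GS: "Gamma_series z n = fact n * exp (z * L) / P z" for z :: real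
    by (simp add: Gamma_series_def L_def P_def)
  have e: "exp ((a1 + s) * L) * exp ((a2 + s) * L) * exp (c1 * L) * exp (c2 * L) =
           exp ((c1 + s) * L) * exp ((c2 + s) * L) * exp (a1 * L) * exp (a2 * L)"
    by (simp add: exp_add[symmetric] algebra_simps)
  define E where "E = exp ((a1 + s) * L) * exp ((a2 + s) * L) * exp (c1 * L) * exp (c2 * L)"
  have Epos: "E > 0" by (simp add: E_def)
  have f: "(fact n :: real) > 0" by simp
  have "Gamma_series (a1 + s) n * Gamma_series (a2 + s) n * Gamma_series c1 n * Gamma_series c2 n /
     (Gamma_series a1 n * Gamma_series a2 n * Gamma_series (c1 + s) n * Gamma_series (c2 + s) n) =
     (fact n ^ 4 * E / (P (a1 + s) * P (a2 + s) * P c1 * P c2)) /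
     (fact n ^ 4 * E / (P a1 * P a2 * P (c1 + s) * P (c2 + s)))"
    unfolding GS E_def using e by (simp add: field_simps power4_eq_xxxx)
  also have "\<dots> = (P a1 * P a2 * P (c1 + s) * P (c2 + s)) / (P (a1 + s) * P (a2 + s) * P c1 * P c2)"
    using Epos f Ppos pos a2p c2p by (simp add: field_simps)
  also have "\<dots> = (\<Prod>k<Suc n. fk k s)"
  proof -
    have "(\<Prod>k<Suc n. fk k s) = (\<Prod>k<Suc n. (a1 + k) * (a2 + k) * (c1 + s + k) * (c2 + s + k)) /
        (\<Prod>k<Suc n. (a1 + s + k) * (a2 + s + k) * (c1 + k) * (c2 + k))"
      unfolding fk_def by (subst prod_dividef[symmetric]) (simp add: add_ac)
    then show ?thesis by (simp add: prod.distrib Pprod)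
  qed
  finally show ?thesis by simp
qed

lemma prod_fk_LIMSEQ:
  assumes s: "s > - a1"
  shows "(\<lambda>n. \<Prod>k<n. fk k s) \<longlonglongrightarrow> GR s"
proof -
  note pos = Gamma_pos_shift[OF s] a1 c1
  have a2p: "a2 > 0" using a1 a12 by simp
  have c2p: "c2 > 0" using c1 c12 by simp
  have ne: "Gamma a1 * Gamma a2 * Gamma (c1 + s) * Gamma (c2 + s) \<noteq> 0"
    using pos a2p c2p by (simp add: Gamma_real_pos less_imp_neq[symmetric])
  have "(\<lambda>n. \<Prod>k<Suc n. fk k s) \<longlonglongrightarrow> GR s"
    unfolding prod_fk[OF s] GR_def using ne by (intro tendsto_intros) auto
  then show ?thesis by (rule LIMSEQ_imp_Suc)
qed

end




context params begin

definition "nu t = (if t > 0 then gg t / (t * (1 - exp (- t))) else 0)"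
definition "HH s t = (if t > 0 then (exp (- s * t) - 1) * gg t / t else 0)"
definition "tk s (k::nat) t = exp (- t) ^ k * HH s t"

lemma nu_measurable[measurable]: "nu \<in> borel_measurable borel"
  unfolding nu_def gg_def by measurable
lemma HH_measurable[measurable]: "HH s \<in> borel_measurable borel"
  unfolding HH_def gg_def by measurable
lemma tk_measurable[measurable]: "tk s k \<in> borel_measurable borel"
  unfolding tk_def by measurable

lemma tk_fr:
  "tk s k = (\<lambda>t. fr (a1 + k + s) (a1 + k) t + fr (a2 + k + s) (a2 + k) t
                 - fr (c1 + k + s) (c1 + k) t - fr (c2 + k + s) (c2 + k) t)"
proof
  fix t :: real
  show "tk s k t = fr (a1 + k + s) (a1 + k) t + fr (a2 + k + s) (a2 + k) t
                 - fr (c1 + k + s) (c1 + k) t - fr (c2 + k + s) (c2 + k) t"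
  proof (cases "t > 0")
    case True
    have ek: "exp (- t) ^ k = exp (- (real k * t))"
      by (simp add: exp_of_nat_mult[symmetric] mult_ac)
    show ?thesis using True unfolding tk_def HH_def fr_def gg_def ek
      by (simp add: field_simps exp_add[symmetric] exp_diff)
  next
    case False
    then show ?thesis by (simp add: tk_def HH_def fr_def)
  qed
qed

lemma fk_pos: "s > - a1 \<Longrightarrow> fk k s > 0"
  using Gamma_pos_shift[of s] a1 c1 a12 c12
  unfolding fk_def by (intro divide_pos_pos mult_pos_pos) auto

lemma int_tk:
  assumes s: "s > - a1"
  shows "integrable lborel (tk s k) \<and> (\<integral>t. tk s k t \<partial>lborel) = ln (fk k s)"
proof -
  note pos = Gamma_pos_shift[OF s]
  have p: "a1 + k + s > 0" "a2 + k + s > 0" "c1 + k + s > 0" "c2 + k + s > 0"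
          "a1 + k > 0" "a2 + k > 0" "c1 + k > 0" "c2 + k > 0"
    using pos a1 a12 c1 c12 by auto
  note F1 = frullani[OF p(1) p(5)] and F2 = frullani[OF p(2) p(6)]
   and F3 = frullani[OF p(3) p(7)] and F4 = frullani[OF p(4) p(8)]
  have "integrable lborel (tk s k)"
    unfolding tk_fr using F1 F2 F3 F4 by auto
  moreover have "(\<integral>t. tk s k t \<partial>lborel) =
     (ln (a1 + k) - ln (a1 + k + s)) + (ln (a2 + k) - ln (a2 + k + s))
     - (ln (c1 + k) - ln (c1 + k + s)) - (ln (c2 + k) - ln (c2 + k + s))"
    unfolding tk_fr using F1 F2 F3 F4 by simp
  moreover have "\<dots> = ln (fk k s)"
    unfolding fk_def using p by (simp add: ln_div ln_mult)
  ultimately show ?thesis by simp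
qed


lemma GR_pos: "s > - a1 \<Longrightarrow> GR s > 0"
  using Gamma_pos_shift[of s] a1 c1 a12 c12 unfolding GR_def
  by (intro divide_pos_pos mult_pos_pos Gamma_real_pos) auto

lemma ln_fk_sums:
  assumes s: "s > - a1"
  shows "(\<lambda>k. ln (fk k s)) sums ln (GR s)"
proof -
  have "(\<lambda>n. ln (\<Prod>k<n. fk k s)) \<longlonglongrightarrow> ln (GR s)"
    by (intro tendsto_ln prod_fk_LIMSEQ s) (use GR_pos[OF s] in simp)
  moreover have "ln (\<Prod>k<n. fk k s) = (\<Sum>k<n. ln (fk k s))" for n
    using fk_pos[OF s] by (subst ln_prod) (auto simp: less_imp_neq[symmetric])
  ultimately show ?thesis unfolding sums_def by simp
qed

lemma HH_sign:
  assumes "t > 0"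
  shows "s \<ge> 0 \<Longrightarrow> HH s t \<le> 0" and "s \<le> 0 \<Longrightarrow> HH s t \<ge> 0"
proof -
  have g: "gg t \<ge> 0" by (rule gg_nonneg[OF assms])
  show "s \<ge> 0 \<Longrightarrow> HH s t \<le> 0"
  proof -
    assume "s \<ge> 0"
    then have "exp (- s * t) \<le> 1" using assms by simp
    then show ?thesis using assms g
      by (auto simp: HH_def intro!: divide_nonpos_pos mult_nonpos_nonneg)
  qed
  show "s \<le> 0 \<Longrightarrow> HH s t \<ge> 0"
  proof -
    assume "s \<le> 0"
    then have "exp (- s * t) \<ge> 1" using assms by (simp add: mult_nonpos_nonneg)
    then show ?thesis using assms g
      by (auto simp: HH_def intro!: divide_nonneg_pos mult_nonneg_nonneg)
  qed
qed

lemma nu_series: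
  assumes s: "s > - a1"
  shows "integrable lborel (\<lambda>t. (exp (- s * t) - 1) * nu t) \<and>
         (\<integral>t. (exp (- s * t) - 1) * nu t \<partial>lborel) = ln (GR s)"
proof -
  have sumeq: "(\<Sum>k. tk s k t) = (exp (- s * t) - 1) * nu t" for t
  proof (cases "t > 0")
    case True
    have n: "norm (exp (- t)) < 1" using True by simp
    have "(\<Sum>k. tk s k t) = (\<Sum>k. exp (- t) ^ k) * HH s t"
      unfolding tk_def by (rule suminf_mult2[symmetric]) (rule summable_geometric[OF n])
    also have "\<dots> = HH s t / (1 - exp (- t))"
      by (simp add: suminf_geometric[OF n])
    also have "\<dots> = (exp (- s * t) - 1) * nu t"
      using True by (simp add: HH_def nu_def)
    finally show ?thesis .
  next
    case False then show ?thesis by (simp add: tk_def HH_def nu_def)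
  qed
  have int: "\<And>k. integrable lborel (tk s k)" using int_tk[OF s] by simp
  have ae: "AE t in lborel. summable (\<lambda>k. norm (tk s k t))"
  proof (intro AE_I2)
    fix t :: real
    show "summable (\<lambda>k. norm (tk s k t))"
    proof (cases "t > 0")
      case True
      have n: "norm (exp (- t)) < 1" using True by simp
      show ?thesis unfolding tk_def norm_mult norm_power
        by (rule summable_mult2) (use summable_geometric[OF n] in simp)
    next
      case False then show ?thesis by (simp add: tk_def HH_def)
    qed
  qed
  have absint: "(\<integral>t. norm (tk s k t) \<partial>lborel) = (if s \<ge> 0 then - ln (fk k s) else ln (fk k s))" for k
  proof (cases "s \<ge> 0")
    case True
    have "(\<lambda>t. norm (tk s k t)) = (\<lambda>t. - tk s k t)"
    proof
      fix t :: real
      show "norm (tk s k t) = - tk s k t"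
      proof (cases "t > 0")
        case t: True
        have "tk s k t \<le> 0" unfolding tk_def using HH_sign(1)[OF t True]
          by (simp add: mult_nonneg_nonpos)
        then show ?thesis by simp
      qed (simp add: tk_def HH_def)
    qed
    then show ?thesis using int_tk[OF s, of k] True by simp
  next
    case False
    have "(\<lambda>t. norm (tk s k t)) = (\<lambda>t. tk s k t)"
    proof
      fix t :: real
      show "norm (tk s k t) = tk s k t"
      proof (cases "t > 0")
        case t: True
        have "tk s k t \<ge> 0" unfolding tk_def using HH_sign(2)[OF t] False
          by simp
        then show ?thesis by simp
      qed (simp add: tk_def HH_def)
    qed
    then show ?thesis using int_tk[OF s, of k] False by simp
  qed
  have summ: "summable (\<lambda>k. (\<integral>t. norm (tk s k t) \<partial>lborel))"
    unfolding absint using ln_fk_sums[OF s]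
    by (cases "s \<ge> 0") (auto intro: summable_minus simp: sums_iff)
  have "(\<lambda>k. (\<integral>t. tk s k t \<partial>lborel)) sums (\<integral>t. (\<Sum>k. tk s k t) \<partial>lborel)"
    by (rule sums_integral[OF int ae summ])
  moreover have "(\<lambda>k. (\<integral>t. tk s k t \<partial>lborel)) sums ln (GR s)"
    using ln_fk_sums[OF s] int_tk[OF s] by simp
  ultimately have "(\<integral>t. (\<Sum>k. tk s k t) \<partial>lborel) = ln (GR s)"
    using sums_unique2 by blast
  moreover have "integrable lborel (\<lambda>t. (\<Sum>k. tk s k t))"
    by (rule integrable_suminf[OF int ae summ])
  ultimately show ?thesis unfolding sumeq by simp
qed

end




lemma Gamma_shift_series:
  fixes z :: real
  assumes z: "z > 0"
  shows "Gamma (z + real n + 1) = Gamma z * fact n * exp (z * ln (real n)) / Gamma_series z n"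
proof -
  have nz: "z \<notin> \<int>\<^sub>\<le>\<^sub>0" using z by (auto elim!: nonpos_Ints_cases)
  have P: "pochhammer z (Suc n) = Gamma (z + real n + 1) / Gamma z"
    using pochhammer_Gamma[OF nz, of "Suc n"] by (simp add: add_ac)
  have Ppos: "pochhammer z (Suc n) > 0" using z by (simp add: pochhammer_pos)
  have Gz: "Gamma z > 0" using z by simp
  have "Gamma_series z n = fact n * exp (z * ln (real n)) / pochhammer z (Suc n)"
    by (simp add: Gamma_series_def)
  then show ?thesis using P Ppos Gz
    by (simp add: field_simps)
qed

lemma Gamma_series_pos:
  fixes z :: real
  assumes "z > 0" shows "Gamma_series z n > 0"
  using assms by (simp add: Gamma_series_def pochhammer_pos)

context params begin

definition "GSr n = Gamma_series c1 n * Gamma_series c2 n / (Gamma_series a1 n * Gamma_series a2 n)"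

lemma a2_pos: "a2 > 0" using a1 a12 by simp
lemma c2_pos: "c2 > 0" using c1 c12 by simp

lemma GSr_pos: "GSr n > 0"
  unfolding GSr_def using a1 a2_pos c1 c2_pos
  by (intro divide_pos_pos mult_pos_pos Gamma_series_pos) auto

lemma GSr_lim: "GSr \<longlonglongrightarrow> Gamma c1 * Gamma c2 / (Gamma a1 * Gamma a2)"
proof -
  have "Gamma a1 * Gamma a2 \<noteq> 0" using a1 a2_pos by (simp add: less_imp_neq[symmetric])
  then show ?thesis unfolding GSr_def[abs_def] by (intro tendsto_intros) auto
qed

lemma GR_nat:
  "GR (real n + 1) = exp (- dd * ln (real n)) * GSr n"
proof -
  note G = Gamma_shift_series[of _ n]
  have A: "Gamma (a1 + (real n + 1)) = Gamma a1 * fact n * exp (a1 * ln (real n)) / Gamma_series a1 n"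
    using G[of a1] a1 by (simp add: add_ac)
  have B: "Gamma (a2 + (real n + 1)) = Gamma a2 * fact n * exp (a2 * ln (real n)) / Gamma_series a2 n"
    using G[of a2] a2_pos by (simp add: add_ac)
  have C: "Gamma (c1 + (real n + 1)) = Gamma c1 * fact n * exp (c1 * ln (real n)) / Gamma_series c1 n"
    using G[of c1] c1 by (simp add: add_ac)
  have D: "Gamma (c2 + (real n + 1)) = Gamma c2 * fact n * exp (c2 * ln (real n)) / Gamma_series c2 n"
    using G[of c2] c2_pos by (simp add: add_ac)
  have pos: "Gamma_series a1 n > 0" "Gamma_series a2 n > 0" "Gamma_series c1 n > 0" "Gamma_series c2 n > 0"
    using a1 a2_pos c1 c2_pos by (auto intro!: Gamma_series_pos)
  have gp: "Gamma a1 > 0" "Gamma a2 > 0" "Gamma c1 > 0" "Gamma c2 > 0"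
    using a1 a2_pos c1 c2_pos by auto
  have e: "exp (a1 * ln (real n)) * exp (a2 * ln (real n)) =
      exp (- dd * ln (real n)) * (exp (c1 * ln (real n)) * exp (c2 * ln (real n)))"
    by (simp add: exp_add[symmetric] dd_def algebra_simps)
  have f: "(fact n :: real) > 0" by simp
  have "GR (real n + 1) = (exp (a1 * ln (real n)) * exp (a2 * ln (real n))) /
      (exp (c1 * ln (real n)) * exp (c2 * ln (real n))) * GSr n"
    unfolding GR_def A B C D GSr_def using pos gp f
    by (simp add: field_simps)
  also have "\<dots> = exp (- dd * ln (real n)) * GSr n"
    unfolding e by simp
  finally show ?thesis .
qed


definition "nup t = (if t > 0 then nu t - dd * exp (- rr * t) / t else 0)"

lemma nup_measurable[measurable]: "nup \<in> borel_measurable borel"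
  unfolding nup_def by measurable

lemma nup_nonneg: "nup t \<ge> 0"
proof (cases "t > 0")
  case True
  define q where "q = 1 - exp (- t)"
  define E where "E = exp (- rr * t)"
  have q: "0 < q" "q \<le> t" using True exp_ge_add_one_self[of "- t"] by (auto simp: q_def)
  have dE: "dd * E \<ge> 0" using dd_nonneg by (simp add: E_def)
  have "dd * E / t \<le> dd * E / q"
    by (rule divide_left_mono) (use q dE True in auto)
  also have "dd * E / q = dd * t * E / (t * q)" using True by simp
  also have "\<dots> \<le> gg t / (t * q)"
    by (rule divide_right_mono) (use gg_lower[OF True] q True in \<open>auto simp: E_def\<close>)
  finally show ?thesis using True by (simp add: nup_def nu_def q_def E_def)
qed (simp add: nup_def)

lemma J_int:
  assumes s: "s > - a1"
  shows "integrable lborel (\<lambda>t. (exp (- s * t) - 1) * nup t) \<and>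
         (\<integral>t. (exp (- s * t) - 1) * nup t \<partial>lborel) = ln (GR s) - dd * (ln rr - ln (rr + s))"
proof -
  have rs: "rr + s > 0" using rr_ge s by linarith
  have eq: "(\<lambda>t. (exp (- s * t) - 1) * nup t) = (\<lambda>t. (exp (- s * t) - 1) * nu t - dd * fr (rr + s) rr t)"
  proof
    fix t :: real
    show "(exp (- s * t) - 1) * nup t = (exp (- s * t) - 1) * nu t - dd * fr (rr + s) rr t"
      by (cases "t > 0") (auto simp: nup_def nu_def fr_def field_simps exp_add[symmetric])
  qed
  note N = nu_series[OF s] and F = frullani[OF rs rr_pos]
  show ?thesis unfolding eq using N F by simp
qed

lemma nup_integrable: "integrable lborel nup"
proof -
  define f where "f n t = ennreal ((1 - exp (- (real n + 1) * t)) * nup t)" for n :: nat and t :: real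
  have fm: "\<And>n. f n \<in> borel_measurable lborel" unfolding f_def by measurable
  have inc: "incseq f"
  proof (intro incseq_SucI le_funI)
    fix n t
    show "f n t \<le> f (Suc n) t"
    proof (cases "t > 0")
      case True
      have "exp (- (real (Suc n) + 1) * t) \<le> exp (- (real n + 1) * t)"
        using True by (simp add: mult_right_mono)
      then show ?thesis unfolding f_def
        by (intro ennreal_leI mult_right_mono) (auto simp: nup_nonneg)
    qed (simp add: f_def nup_def)
  qed
  have lim: "(\<lambda>n. f n t) \<longlonglongrightarrow> ennreal (nup t)" for t
  proof (cases "t > 0")
    case True
    have "(\<lambda>n. exp (- (real n + 1) * t)) \<longlonglongrightarrow> 0"
    proof -
      have h: "(\<lambda>n. exp (- t) ^ Suc n) \<longlonglongrightarrow> 0"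
        by (rule LIMSEQ_Suc[OF LIMSEQ_power_zero]) (use True in simp)
      have eq: "(\<lambda>n. exp (- (real n + 1) * t)) = (\<lambda>n. exp (- t) ^ Suc n)"
      proof
        fix n
        have "exp (- t) ^ Suc n = exp (real (Suc n) * (- t))" by (rule exp_of_nat_mult[symmetric])
        then show "exp (- (real n + 1) * t) = exp (- t) ^ Suc n" by (simp add: algebra_simps)
      qed
      show ?thesis unfolding eq by (rule h)
    qed
    then have "(\<lambda>n. (1 - exp (- (real n + 1) * t)) * nup t) \<longlonglongrightarrow> (1 - 0) * nup t"
      by (intro tendsto_intros)
    then show ?thesis unfolding f_def by (intro tendsto_ennrealI) simp
  qed (simp add: f_def nup_def)
  have Ltend: "(\<lambda>n. integral\<^sup>N lborel (f n)) \<longlonglongrightarrow> (\<integral>\<^sup>+t. ennreal (nup t) \<partial>lborel)"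
    by (rule nn_integral_LIMSEQ[OF inc fm lim])
  have "convergent (\<lambda>n. ln (GSr n))"
  proof (rule convergentI)
    have "Gamma c1 * Gamma c2 / (Gamma a1 * Gamma a2) > 0"
      using a1 a2_pos c1 c2_pos by (auto intro!: divide_pos_pos mult_pos_pos)
    then show "(\<lambda>n. ln (GSr n)) \<longlonglongrightarrow> ln (Gamma c1 * Gamma c2 / (Gamma a1 * Gamma a2))"
      by (intro tendsto_ln GSr_lim) (rule less_imp_neq[symmetric])
  qed
  then obtain K where K: "\<And>n. norm (ln (GSr n)) \<le> K"
    using convergent_imp_Bseq BseqE by metis
  have bound: "integral\<^sup>N lborel (f n) \<le> ennreal (K + dd * ln rr)" for n
  proof -
    have sp: "real n + 1 > - a1" using a1 by simp
    note Jn = J_int[OF sp]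
    have fn: "f n = (\<lambda>t. ennreal (- ((exp (- (real n + 1) * t) - 1) * nup t)))"
      unfolding f_def by (simp add: algebra_simps)
    have nn: "AE t in lborel. 0 \<le> - ((exp (- (real n + 1) * t) - 1) * nup t)"
    proof (intro AE_I2)
      fix t :: real
      show "0 \<le> - ((exp (- (real n + 1) * t) - 1) * nup t)"
      proof (cases "t > 0")
        case True
        have "- (real n + 1) * t \<le> 0" by (rule mult_nonpos_nonneg) (use True in auto)
        then have "exp (- (real n + 1) * t) \<le> 1" by simp
        then show ?thesis using nup_nonneg[of t] by (simp add: mult_nonpos_nonneg)
      qed (simp add: nup_def)
    qed
    have "integral\<^sup>N lborel (f n) = ennreal (- (ln (GR (real n + 1)) - dd * (ln rr - ln (rr + (real n + 1)))))"
      unfolding fn using Jn nn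
      by (subst nn_integral_eq_integral) (auto intro: integrable_minus)
    also have "- (ln (GR (real n + 1)) - dd * (ln rr - ln (rr + (real n + 1)))) =
        - ln (GSr n) + dd * (ln (real n) - ln (rr + real n + 1)) + dd * ln rr"
      unfolding GR_nat using GSr_pos[of n] by (simp add: ln_mult algebra_simps)
    also have "\<dots> \<le> K + dd * ln rr"
    proof -
      have "ln (real n) \<le> ln (rr + real n + 1)"
      proof (cases "n = 0")
        case True then show ?thesis using rr_pos by simp
      next
        case False then show ?thesis using rr_pos by simp
      qed
      then have "dd * (ln (real n) - ln (rr + real n + 1)) \<le> 0"
        using dd_nonneg by (simp add: mult_nonneg_nonpos)
      moreover have "- ln (GSr n) \<le> K" using K[of n] by simp
      ultimately show ?thesis by linarith
    qed
    finally show ?thesis by (simp add: ennreal_leI)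
  qed
  have fin: "(\<integral>\<^sup>+t. ennreal (nup t) \<partial>lborel) \<le> ennreal (K + dd * ln rr)"
    by (rule LIMSEQ_le_const2[OF Ltend]) (use bound in auto)
  show ?thesis
    by (rule integrableI_nonneg) (use fin nup_nonneg in \<open>auto simp: top_unique intro: le_less_trans\<close>)
qed

end




context params begin

definition "ll = (\<integral>t. nup t \<partial>lborel)"
definition "rho = (if ll > 0 then density lborel (\<lambda>t. ennreal (nup t / ll)) else return borel 0)"
definition "Jf s = (\<integral>t. (exp (- s * t) - 1) * nup t \<partial>lborel)"
definition "Lr s = (if ll > 0 then (ll + Jf s) / ll else 1)"

lemma ll_nonneg: "ll \<ge> 0"
  unfolding ll_def by (intro integral_nonneg_AE) (simp add: nup_nonneg)

lemma rho_basic: "prob_space rho \<and> sets rho = sets borel \<and> (AE y in rho. y \<ge> 0)"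
proof (cases "ll > 0")
  case True
  have int: "integrable lborel (\<lambda>t. nup t / ll)" using nup_integrable by simp
  have "(\<integral>\<^sup>+t. ennreal (nup t / ll) \<partial>lborel) = ennreal (\<integral>t. nup t / ll \<partial>lborel)"
    using int by (intro nn_integral_eq_integral) (use True in \<open>auto intro!: AE_I2 divide_nonneg_pos nup_nonneg\<close>)
  also have "(\<integral>t. nup t / ll \<partial>lborel) = 1"
    using True by (simp add: ll_def[symmetric])
  finally have one: "(\<integral>\<^sup>+t. ennreal (nup t / ll) \<partial>lborel) = 1" by simp
  have rd: "rho = density lborel (\<lambda>t. ennreal (nup t / ll))" using True by (simp add: rho_def)
  have "prob_space rho"
    unfolding rd using one
    by (intro prob_spaceI) (simp add: emeasure_density)
  moreover have "AE y in rho. y \<ge> 0"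
    unfolding rd
    by (subst AE_density) (auto simp: nup_def intro!: AE_I2)
  ultimately show ?thesis unfolding rho_def using True by simp
next
  case False
  then have rd: "rho = return borel 0" by (simp add: rho_def)
  show ?thesis unfolding rd by (simp add: prob_space_return AE_return)
qed

lemma ll_zero_J:
  assumes "\<not> ll > 0" and s: "s > - a1"
  shows "Jf s = 0"
proof -
  have "ll = 0" using assms ll_nonneg by simp
  then have "AE t in lborel. nup t = 0"
    using nup_integrable nup_nonneg
    by (subst integral_nonneg_eq_0_iff_AE[symmetric]) (auto simp: ll_def)
  then have "AE t in lborel. (exp (- s * t) - 1) * nup t = 0" by eventually_elim simp
  then show ?thesis unfolding Jf_def by (rule integral_eq_zero_AE)
qed

lemma rho_lap:
  assumes s: "s > - a1"
  shows "(\<integral>\<^sup>+y. ennreal (exp (- s * y)) \<partial>rho) = ennreal (Lr s) \<and> Lr s \<ge> 0"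
proof (cases "ll > 0")
  case True
  note JI = J_int[OF s]
  have int: "integrable lborel (\<lambda>t. exp (- s * t) * nup t / ll)"
  proof -
    have "integrable lborel (\<lambda>t. ((exp (- s * t) - 1) * nup t + nup t) / ll)"
      using JI nup_integrable by auto
    then show ?thesis by (simp add: algebra_simps)
  qed
  have nn: "0 \<le> exp (- s * t) * nup t / ll" for t using nup_nonneg[of t] True by simp
  have "(\<integral>\<^sup>+y. ennreal (exp (- s * y)) \<partial>rho) = (\<integral>\<^sup>+t. ennreal (nup t / ll) * ennreal (exp (- s * t)) \<partial>lborel)"
    unfolding rho_def using True by (simp add: nn_integral_density)
  also have "\<dots> = (\<integral>\<^sup>+t. ennreal (exp (- s * t) * nup t / ll) \<partial>lborel)"
    using True by (intro nn_integral_cong) (simp add: ennreal_mult'[symmetric] nup_nonneg mult_ac)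
  also have "\<dots> = ennreal (\<integral>t. exp (- s * t) * nup t / ll \<partial>lborel)"
    using int nn by (intro nn_integral_eq_integral) auto
  also have E1: "(\<integral>t. exp (- s * t) * nup t / ll \<partial>lborel) = Lr s"
  proof -
    have "(\<integral>t. exp (- s * t) * nup t / ll \<partial>lborel) = (\<integral>t. ((exp (- s * t) - 1) * nup t + nup t) / ll \<partial>lborel)"
      by (simp add: algebra_simps)
    also have "\<dots> = (\<integral>t. ((exp (- s * t) - 1) * nup t + nup t) \<partial>lborel) / ll"
      by simp
    also have "(\<integral>t. ((exp (- s * t) - 1) * nup t + nup t) \<partial>lborel) = Jf s + ll"
      unfolding Jf_def ll_def using JI nup_integrable by (intro Bochner_Integration.integral_add) auto
    finally show ?thesis using True by (simp add: Lr_def add.commute)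
  qed
  finally have A: "(\<integral>\<^sup>+y. ennreal (exp (- s * y)) \<partial>rho) = ennreal (Lr s)" .
  have "Lr s = (\<integral>t. exp (- s * t) * nup t / ll \<partial>lborel)"
    using E1 by simp
  also have "\<dots> \<ge> 0" using nn by (intro integral_nonneg_AE) auto
  finally show ?thesis using A by simp
next
  case False
  then show ?thesis by (simp add: rho_def Lr_def nn_integral_return)
qed

lemma GR_formula:
  assumes s: "s > - a1"
  shows "GR s = (rr / (rr + s)) powr dd * exp (ll * Lr s - ll)"
proof -
  have rs: "rr + s > 0" using rr_ge s by linarith
  have LJ: "ll * Lr s - ll = Jf s"
  proof (cases "ll > 0")
    case True
    then have "ll * Lr s = ll + Jf s" by (simp add: Lr_def)
    then show ?thesis by simp
  next
    case False
    then show ?thesis using ll_zero_J[OF False s] ll_nonneg by (simp add: Lr_def)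
  qed
  have J: "Jf s = ln (GR s) - dd * (ln rr - ln (rr + s))"
    using J_int[OF s] by (simp add: Jf_def)
  have q: "rr / (rr + s) > 0" using rr_pos rs by simp
  have "(rr / (rr + s)) powr dd = exp (dd * ln (rr / (rr + s)))"
    using q rr_pos rs by (simp add: powr_def)
  also have "ln (rr / (rr + s)) = ln rr - ln (rr + s)" using rr_pos rs by (simp add: ln_div)
  finally have P: "(rr / (rr + s)) powr dd = exp (dd * (ln rr - ln (rr + s)))" .
  have "exp (ln (GR s) - dd * (ln rr - ln (rr + s))) = GR s / exp (dd * (ln rr - ln (rr + s)))"
    using GR_pos[OF s] by (simp add: exp_diff)
  then show ?thesis
    unfolding LJ J P by simp
qed

lemma GR_atom:
  assumes "a1 + a2 = c1 + c2"
  shows "(\<lambda>n. GR (real n)) \<longlonglongrightarrow> Gamma c1 * Gamma c2 / (Gamma a1 * Gamma a2)"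
proof -
  have "dd = 0" using assms by (simp add: dd_def)
  then have eq: "(\<lambda>n. GR (real (Suc n))) = GSr"
  proof -
    assume d: "dd = 0"
    show ?thesis
    proof
      fix n
      have "GR (real (Suc n)) = GR (real n + 1)" by (simp add: add.commute)
      also have "\<dots> = GSr n" using GR_nat[of n] d by simp
      finally show "GR (real (Suc n)) = GSr n" .
    qed
  qed
  have "(\<lambda>n. GR (real (Suc n))) \<longlonglongrightarrow> Gamma c1 * Gamma c2 / (Gamma a1 * Gamma a2)"
    unfolding eq by (rule GSr_lim)
  then show ?thesis by (rule LIMSEQ_imp_Suc)
qed

lemma main:
  "\<exists>M :: real measure.
           prob_space M \<and> sets M = sets borel \<and>
           (AE x in M. 0 \<le> x \<and> x \<le> 1) \<and>
           (\<forall>s::real. s > - a1 \<longrightarrow>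
              integrable M (\<lambda>x. x powr s) \<and>
              (\<integral>x. x powr s \<partial>M) =
                Gamma (a1 + s) * Gamma (a2 + s) * Gamma c1 * Gamma c2 /
                (Gamma a1 * Gamma a2 * Gamma (c1 + s) * Gamma (c2 + s))) \<and>
           infinitely_divisible (distr M borel ln) \<and>
           (a1 + a2 = c1 + c2 \<longrightarrow>
              measure M {1} = Gamma c1 * Gamma c2 / (Gamma a1 * Gamma a2))"
proof -
  have "\<exists>M :: real measure. prob_space M \<and> sets M = sets borel \<and> (AE x in M. 0 \<le> x \<and> x \<le> 1) \<and>
     (\<forall>s\<in>{s. s > - a1}. integrable M (\<lambda>x. x powr s) \<and> (\<integral>x. x powr s \<partial>M) = GR s) \<and>
     infinitely_divisible (distr M borel ln) \<and>
     (\<forall>c. (\<forall>n::nat. real n \<in> {s. s > - a1}) \<longrightarrow> (\<lambda>n. GR (real n)) \<longlonglongrightarrow> c \<longrightarrow> measure M {1} = c)"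
  proof (rule assembly[where R=GR and Lr=Lr and S="{s. s > - a1}" and \<rho>=rho, OF dd_nonneg rr_pos ll_nonneg])
    show "prob_space rho" "sets rho = sets borel" "AE y in rho. y \<ge> 0" using rho_basic by auto
    fix s assume "s \<in> {s. s > - a1}"
    then have s: "s > - a1" by simp
    show "rr + s > 0 \<and> Lr s \<ge> 0 \<and> (\<integral>\<^sup>+y. ennreal (exp (- s * y)) \<partial>rho) = ennreal (Lr s) \<and>
        GR s = (rr / (rr + s)) powr dd * exp (ll * Lr s - ll)"
    proof (intro conjI)
      show "rr + s > 0" using rr_ge s by linarith
      show "Lr s \<ge> 0" "(\<integral>\<^sup>+y. ennreal (exp (- s * y)) \<partial>rho) = ennreal (Lr s)"
        using rho_lap[OF s] by auto
      show "GR s = (rr / (rr + s)) powr dd * exp (ll * Lr s - ll)" by (rule GR_formula[OF s])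
    qed
  qed
  then obtain M :: "real measure" where M: "prob_space M" "sets M = sets borel" "AE x in M. 0 \<le> x \<and> x \<le> 1"
     "\<forall>s\<in>{s. s > - a1}. integrable M (\<lambda>x. x powr s) \<and> (\<integral>x. x powr s \<partial>M) = GR s"
     "infinitely_divisible (distr M borel ln)"
     "\<forall>c. (\<forall>n::nat. real n \<in> {s. s > - a1}) \<longrightarrow> (\<lambda>n. GR (real n)) \<longlonglongrightarrow> c \<longrightarrow> measure M {1} = c"
    by blast
  have atom: "a1 + a2 = c1 + c2 \<longrightarrow> measure M {1} = Gamma c1 * Gamma c2 / (Gamma a1 * Gamma a2)"
  proof
    assume eq: "a1 + a2 = c1 + c2"
    have nS: "\<forall>n::nat. real n \<in> {s. s > - a1}"
    proof
      fix n :: nat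
      have "real n \<ge> 0" by simp
      then show "real n \<in> {s. s > - a1}" using a1 by simp
    qed
    show "measure M {1} = Gamma c1 * Gamma c2 / (Gamma a1 * Gamma a2)"
      using M(6) nS GR_atom[OF eq] by blast
  qed
  have mom: "\<forall>s::real. s > - a1 \<longrightarrow>
              integrable M (\<lambda>x. x powr s) \<and>
              (\<integral>x. x powr s \<partial>M) =
                Gamma (a1 + s) * Gamma (a2 + s) * Gamma c1 * Gamma c2 /
                (Gamma a1 * Gamma a2 * Gamma (c1 + s) * Gamma (c2 + s))"
  proof (intro allI impI)
    fix s :: real assume "s > - a1"
    then have "integrable M (\<lambda>x. x powr s) \<and> (\<integral>x. x powr s \<partial>M) = GR s" using M(4) by blast
    then show "integrable M (\<lambda>x. x powr s) \<and>
              (\<integral>x. x powr s \<partial>M) =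
                Gamma (a1 + s) * Gamma (a2 + s) * Gamma c1 * Gamma c2 /
                (Gamma a1 * Gamma a2 * Gamma (c1 + s) * Gamma (c2 + s))"
      by (simp only: GR_def)
  qed
  show ?thesis
    using M(1,2,3,5) mom atom by blast
qed

end



theorem mainTheorem7:
  fixes a1 a2 c1 c2 :: real
  assumes "0 < a1" "a1 \<le> a2" "0 < c1" "c1 \<le> c2"
    and "a1 \<le> c1" and "a1 + a2 \<le> c1 + c2"
  shows "\<exists>M :: real measure.
           prob_space M \<and> sets M = sets borel \<and>
           (AE x in M. 0 \<le> x \<and> x \<le> 1) \<and>
           (\<forall>s::real. s > - a1 \<longrightarrow>
              integrable M (\<lambda>x. x powr s) \<and>
              (\<integral>x. x powr s \<partial>M) =
                Gamma (a1 + s) * Gamma (a2 + s) * Gamma c1 * Gamma c2 /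
                (Gamma a1 * Gamma a2 * Gamma (c1 + s) * Gamma (c2 + s))) \<and>
           infinitely_divisible (distr M borel ln) \<and>
           (a1 + a2 = c1 + c2 \<longrightarrow>
              measure M {1} = Gamma c1 * Gamma c2 / (Gamma a1 * Gamma a2))"
proof -
  interpret params a1 a2 c1 c2 using assms by unfold_locales
  show ?thesis by (rule main)
qed

end
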